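(* Fix a problem type (IP, SE or PS), a step $k$ and data $y_k$. Let $P_{k-1},Q_{k-1}\in\bar{\mathcal{P}}_k(\bar{\mathcal{X}})$, $P_k=F_k(P_{k-1})$, $Q_k^*=F_k(Q_{k-1})$, and write $G_P=\int_{\bar{\mathcal{X}}}g(y_k,\bar x)P_{k-1}(d\bar x)$, $G_Q=\int_{\bar{\mathcal{X}}}g(y_k,\bar x)Q_{k-1}(d\bar x)$. Suppose either (H1) there is $\nu\in\bar{\mathcal{M}}(\bar{\mathcal{X}})$ with $P_{k-1}\ll\nu$, $Q_{k-1}\ll\nu$, $$\int g(y_k,\bar x)\sqrt{\tfrac{dP_{k-1}}{d\nu}\tfrac{dQ_{k-1}}{d\nu}}(\bar x)\nu(d\bar x)\ge\int g(y_k,\bar x)\nu(d\bar x)\int\sqrt{\tfrac{dP_{k-1}}{d\nu}\tfrac{dQ_{k-1}}{d\nu}}(\bar x)\nu(d\bar x)$$ and $\int g(y_k,\bar x)\nu(d\bar x)\ge\sqrt{G_PG_Q}$; or (H2) there is $\nu\in\bar{\mathcal{M}}(\bar{\mathcal{X}})$ with $P_{k-1}\ll\nu$, $Q_{k-1}\ll\nu$, $$\int g(y_k,\bar x)\Big(\sqrt{\tfrac{dP_{k-1}}{d\nu}(\bar x)}-\sqrt{\tfrac{dQ_{k-1}}{d\nu}(\bar x)}\Big)^2\nu(d\bar x)\le\int g(y_k,\bar x)\nu(d\bar x)\int\Big(\sqrt{\tfrac{dP_{k-1}}{d\nu}(\bar x)}-\sqrt{\tfrac{dQ_{k-1}}{d\nu}(\bar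 x)}\Big)^2\nu(d\bar x)$$ and $\int g(y_k,\bar x)\nu(d\bar x)\le\sqrt{G_PG_Q}$ (all integrals over $\bar{\mathcal{X}}$). Then $d_H(P_k,Q_k^* )\le d_H(P_{k-1},Q_{k-1})$.
   Context: Problems and notation. $(\mathcal{X},d_{\mathcal{X}})$ is a Polish metric space; in PS also $\mathcal{X}\times\mathcal{W}$; $dx,dw$ are Lebesgue measure and $\lambda$ is Lebesgue measure on $\mathcal{X}\times\mathcal{W}$. IP: measurable likelihood $h(y_k,x)$, $\tilde F_k\mu(dx)=h(y_k,x)\mu(dx)$. SE: transition density $T_k(x_k,x_{k-1})$ (density in $x_k$), observation density $h_k(y_k,x_k)$, $\tilde F_k\mu(dx)=h_k(y_k,x)(\int T_k(x,x')\mu(dx'))dx$. PS: $T_k(x_k,x_{k-1},w)$, $h_k(y_k,x_k,w)$, for $\mu\ll\lambda$ with density $\pi$, $\tilde F_k\mu(dx,dw)=h_k(y_k,x,w)(\int T_k(x,x',w)\pi(x',w)dx')dxdw$. Evidence $Z_k(\mu)=\tilde F_k\mu(\bar{\mathcal{X}})$; posterior $F_k\mu=\tilde F_k\mu/Z_k(\mu)$. Admissible priors $\bar{\mathcal{P}}_k(\bar{\mathcal{X}})$: IP: probability measures with $0<Z_k(\mu)<\infty$; SE: additionally $\int T_k(x_k,x')\mu(dx')<\infty$ for all $x_k$; PS: $\mu\ll\lambda$, $\int T_k(x_k,x',w)\pi(x',w)dx'<\infty$ for all $x_k,w$, $0<Z_k(\mu)<\infty$. Unified notation: IP: $\bar x=x$,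 $\bar{\mathcal{X}}=\mathcal{X}$, $g(y_k,\bar x)=h(y_k,x)$, $\bar{\mathcal{M}}(\bar{\mathcal{X}})$ = all $\sigma$-finite measures on $\mathcal{X}$. SE: $\bar x=x_{k-1}$, $\bar{\mathcal{X}}=\mathcal{X}$, $g(y_k,\bar x)=\int_{\mathcal{X}}h_k(y_k,x_k)T_k(x_k,x_{k-1})dx_k$, $\bar{\mathcal{M}}$ = all $\sigma$-finite measures on $\mathcal{X}$. PS: $\bar x=(x_{k-1},w)$, $\bar{\mathcal{X}}=\mathcal{X}\times\mathcal{W}$, $g(y_k,\bar x)=\int_{\mathcal{X}}h_k(y_k,x_k,w)T_k(x_k,x_{k-1},w)dx_k$, $\bar{\mathcal{M}}=\{\lambda\}$. Hellinger distance $d_H(\mu,\mu')=\sqrt{\frac12\int(\sqrt{d\mu/d\nu}-\sqrt{d\mu'/d\nu})^2d\nu}$. *)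

theory Defs
  imports "HOL-Probability.Probability"
begin

definition sum_meas :: "'a measure \<Rightarrow> 'a measure \<Rightarrow> 'a measure" where
  "sum_meas M N = measure_of (space M) (sets M) (\<lambda>A. emeasure M A + emeasure N A)"

definition rd :: "'a measure \<Rightarrow> 'a measure \<Rightarrow> 'a \<Rightarrow> real" where
  "rd \<nu> \<mu> x = enn2real (RN_deriv \<nu> \<mu> x)"

definition hellinger_wrt :: "'a measure \<Rightarrow> 'a measure \<Rightarrow> 'a measure \<Rightarrow> real" where
  "hellinger_wrt \<nu> \<mu> \<mu>' =
     sqrt (1/2 * enn2real (\<integral>\<^sup>+x. ennreal ((sqrt (rd \<nu> \<mu> x) - sqrt (rd \<nu> \<mu>' x))\<^sup>2) \<partial>\<nu>))"

text \<open>Hellinger distance, computed w.r.t. the dominating measure mu + mu'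
  (the value does not depend on the dominating measure).\<close>
definition hellinger :: "'a measure \<Rightarrow> 'a measure \<Rightarrow> real" where
  "hellinger \<mu> \<mu>' = hellinger_wrt (sum_meas \<mu> \<mu>') \<mu> \<mu>'"

definition evidence :: "'a measure \<Rightarrow> ennreal" where
  "evidence M = emeasure M (space M)"

definition normalize :: "'a measure \<Rightarrow> 'a measure" where
  "normalize M = density M (\<lambda>_. 1 / evidence M)"

definition hypH1 :: "('a \<Rightarrow> ennreal) \<Rightarrow> 'a measure \<Rightarrow> 'a measure \<Rightarrow> 'a measure \<Rightarrow> bool" where
  "hypH1 g \<nu> P Q \<longleftrightarrow>
     absolutely_continuous \<nu> P \<and> absolutely_continuous \<nu> Q \<and>
     (\<integral>\<^sup>+x. g x * ennreal (sqrt (rd \<nu> P x * rd \<nu> Q x)) \<partial>\<nu>)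
        \<ge> (\<integral>\<^sup>+x. g x \<partial>\<nu>) * (\<integral>\<^sup>+x. ennreal (sqrt (rd \<nu> P x * rd \<nu> Q x)) \<partial>\<nu>) \<and>
     (\<integral>\<^sup>+x. g x \<partial>\<nu>)
        \<ge> ennreal (sqrt (enn2real (\<integral>\<^sup>+x. g x \<partial>P) * enn2real (\<integral>\<^sup>+x. g x \<partial>Q)))"

definition hypH2 :: "('a \<Rightarrow> ennreal) \<Rightarrow> 'a measure \<Rightarrow> 'a measure \<Rightarrow> 'a measure \<Rightarrow> bool" where
  "hypH2 g \<nu> P Q \<longleftrightarrow>
     absolutely_continuous \<nu> P \<and> absolutely_continuous \<nu> Q \<and>
     (\<integral>\<^sup>+x. g x * ennreal ((sqrt (rd \<nu> P x) - sqrt (rd \<nu> Q x))\<^sup>2) \<partial>\<nu>)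
        \<le> (\<integral>\<^sup>+x. g x \<partial>\<nu>) * (\<integral>\<^sup>+x. ennreal ((sqrt (rd \<nu> P x) - sqrt (rd \<nu> Q x))\<^sup>2) \<partial>\<nu>) \<and>
     (\<integral>\<^sup>+x. g x \<partial>\<nu>)
        \<le> ennreal (sqrt (enn2real (\<integral>\<^sup>+x. g x \<partial>P) * enn2real (\<integral>\<^sup>+x. g x \<partial>Q)))"

definition Mbar_borel :: "'a::topological_space measure set" where
  "Mbar_borel = {\<nu>. sigma_finite_measure \<nu> \<and> sets \<nu> = sets borel}"

section \<open>IP: inverse problem\<close>

definition IP_tilde :: "('y \<Rightarrow> 'x::polish_space \<Rightarrow> real) \<Rightarrow> 'y \<Rightarrow> 'x measure \<Rightarrow> 'x measure" where
  "IP_tilde h y \<mu> = density \<mu> (\<lambda>x. ennreal (h y x))"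

definition IP_post :: "('y \<Rightarrow> 'x::polish_space \<Rightarrow> real) \<Rightarrow> 'y \<Rightarrow> 'x measure \<Rightarrow> 'x measure" where
  "IP_post h y \<mu> = normalize (IP_tilde h y \<mu>)"

definition IP_adm :: "('y \<Rightarrow> 'x::polish_space \<Rightarrow> real) \<Rightarrow> 'y \<Rightarrow> 'x measure \<Rightarrow> bool" where
  "IP_adm h y \<mu> \<longleftrightarrow> prob_space \<mu> \<and> sets \<mu> = sets borel \<and>
     0 < evidence (IP_tilde h y \<mu>) \<and> evidence (IP_tilde h y \<mu>) < \<infinity>"

definition IP_g :: "('y \<Rightarrow> 'x::polish_space \<Rightarrow> real) \<Rightarrow> 'y \<Rightarrow> 'x \<Rightarrow> ennreal" where
  "IP_g h y x = ennreal (h y x)"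

definition IP_model :: "('y \<Rightarrow> 'x::polish_space \<Rightarrow> real) \<Rightarrow> 'y \<Rightarrow> bool" where
  "IP_model h y \<longleftrightarrow> (\<forall>x. 0 \<le> h y x) \<and> h y \<in> borel_measurable borel"

section \<open>SE: state estimation (X Euclidean, dx = Lebesgue measure)\<close>

definition SE_tilde :: "('a::euclidean_space \<Rightarrow> 'a \<Rightarrow> real) \<Rightarrow> ('y \<Rightarrow> 'a \<Rightarrow> real) \<Rightarrow> 'y
    \<Rightarrow> 'a measure \<Rightarrow> 'a measure" where
  "SE_tilde T h y \<mu> = density lborel (\<lambda>x. ennreal (h y x) * (\<integral>\<^sup>+x'. ennreal (T x x') \<partial>\<mu>))"

definition SE_post :: "('a::euclidean_space \<Rightarrow> 'a \<Rightarrow> real) \<Rightarrow> ('y \<Rightarrow> 'a \<Rightarrow> real) \<Rightarrow> 'y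
    \<Rightarrow> 'a measure \<Rightarrow> 'a measure" where
  "SE_post T h y \<mu> = normalize (SE_tilde T h y \<mu>)"

definition SE_adm :: "('a::euclidean_space \<Rightarrow> 'a \<Rightarrow> real) \<Rightarrow> ('y \<Rightarrow> 'a \<Rightarrow> real) \<Rightarrow> 'y
    \<Rightarrow> 'a measure \<Rightarrow> bool" where
  "SE_adm T h y \<mu> \<longleftrightarrow> prob_space \<mu> \<and> sets \<mu> = sets borel \<and>
     (\<forall>x. (\<integral>\<^sup>+x'. ennreal (T x x') \<partial>\<mu>) < \<infinity>) \<and>
     0 < evidence (SE_tilde T h y \<mu>) \<and> evidence (SE_tilde T h y \<mu>) < \<infinity>"

definition SE_g :: "('a::euclidean_space \<Rightarrow> 'a \<Rightarrow> real) \<Rightarrow> ('y \<Rightarrow> 'a \<Rightarrow> real) \<Rightarrow> 'y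
    \<Rightarrow> 'a \<Rightarrow> ennreal" where
  "SE_g T h y x' = (\<integral>\<^sup>+xk. ennreal (h y xk * T xk x') \<partial>lborel)"

text \<open>Standing assumptions: T is a transition density (density in its first argument),
  h is a nonnegative measurable observation density.\<close>
definition SE_model :: "('a::euclidean_space \<Rightarrow> 'a \<Rightarrow> real) \<Rightarrow> ('y \<Rightarrow> 'a \<Rightarrow> real) \<Rightarrow> 'y \<Rightarrow> bool" where
  "SE_model T h y \<longleftrightarrow> (\<forall>x x'. 0 \<le> T x x') \<and> (\<lambda>(x, x'). T x x') \<in> borel_measurable borel \<and>
     (\<forall>x'. (\<integral>\<^sup>+x. ennreal (T x x') \<partial>lborel) = 1) \<and>
     (\<forall>x. 0 \<le> h y x) \<and> h y \<in> borel_measurable borel"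

section \<open>PS: joint state-parameter estimation on X \<times> W (lambda = Lebesgue measure)\<close>

definition PS_tilde :: "('a::euclidean_space \<Rightarrow> 'a \<Rightarrow> 'w::euclidean_space \<Rightarrow> real)
    \<Rightarrow> ('y \<Rightarrow> 'a \<Rightarrow> 'w \<Rightarrow> real) \<Rightarrow> 'y \<Rightarrow> ('a \<times> 'w) measure \<Rightarrow> ('a \<times> 'w) measure" where
  "PS_tilde T h y \<mu> = density lborel (\<lambda>(x, w). ennreal (h y x w) *
      (\<integral>\<^sup>+x'. ennreal (T x x' w) * RN_deriv lborel \<mu> (x', w) \<partial>lborel))"

definition PS_post :: "('a::euclidean_space \<Rightarrow> 'a \<Rightarrow> 'w::euclidean_space \<Rightarrow> real)
    \<Rightarrow> ('y \<Rightarrow> 'a \<Rightarrow> 'w \<Rightarrow> real) \<Rightarrow> 'y \<Rightarrow> ('a \<times> 'w) measure \<Rightarrow> ('a \<times> 'w) measure" where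
  "PS_post T h y \<mu> = normalize (PS_tilde T h y \<mu>)"

definition PS_adm :: "('a::euclidean_space \<Rightarrow> 'a \<Rightarrow> 'w::euclidean_space \<Rightarrow> real)
    \<Rightarrow> ('y \<Rightarrow> 'a \<Rightarrow> 'w \<Rightarrow> real) \<Rightarrow> 'y \<Rightarrow> ('a \<times> 'w) measure \<Rightarrow> bool" where
  "PS_adm T h y \<mu> \<longleftrightarrow> prob_space \<mu> \<and> sets \<mu> = sets lborel \<and> absolutely_continuous lborel \<mu> \<and>
     (\<exists>\<pi>\<in>borel_measurable lborel. \<mu> = density lborel \<pi> \<and>
        (\<forall>x w. (\<integral>\<^sup>+x'. ennreal (T x x' w) * \<pi> (x', w) \<partial>lborel) < \<infinity>)) \<and>
     0 < evidence (PS_tilde T h y \<mu>) \<and> evidence (PS_tilde T h y \<mu>) < \<infinity>"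

definition PS_g :: "('a::euclidean_space \<Rightarrow> 'a \<Rightarrow> 'w::euclidean_space \<Rightarrow> real)
    \<Rightarrow> ('y \<Rightarrow> 'a \<Rightarrow> 'w \<Rightarrow> real) \<Rightarrow> 'y \<Rightarrow> 'a \<times> 'w \<Rightarrow> ennreal" where
  "PS_g T h y = (\<lambda>(x', w). \<integral>\<^sup>+xk. ennreal (h y xk w * T xk x' w) \<partial>lborel)"

definition PS_model :: "('a::euclidean_space \<Rightarrow> 'a \<Rightarrow> 'w::euclidean_space \<Rightarrow> real)
    \<Rightarrow> ('y \<Rightarrow> 'a \<Rightarrow> 'w \<Rightarrow> real) \<Rightarrow> 'y \<Rightarrow> bool" where
  "PS_model T h y \<longleftrightarrow> (\<forall>x x' w. 0 \<le> T x x' w) \<and>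
     (\<lambda>(x, x', w). T x x' w) \<in> borel_measurable borel \<and>
     (\<forall>x' w. (\<integral>\<^sup>+x. ennreal (T x x' w) \<partial>lborel) = 1) \<and>
     (\<forall>x w. 0 \<le> h y x w) \<and> (\<lambda>(x, w). h y x w) \<in> borel_measurable borel"

definition Mbar_PS :: "('a::euclidean_space \<times> 'w::euclidean_space) measure set" where
  "Mbar_PS = {lborel}"

end

theory Submission
  imports Defs
begin

definition esq :: "ennreal \<Rightarrow> ennreal" where
  "esq x = (if x = top then top else ennreal (sqrt (enn2real x)))"

lemma esq_ennreal[simp]: "0 \<le> r \<Longrightarrow> esq (ennreal r) = ennreal (sqrt r)"
  by (simp add: esq_def)

lemma esq_top[simp]: "esq top = top" by (simp add: esq_def)
lemma esq_0[simp]: "esq 0 = 0" by (simp add: esq_def)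
lemma esq_1[simp]: "esq 1 = 1" by (simp add: esq_def)

lemma esq_eq_0_iff[simp]: "esq x = 0 \<longleftrightarrow> x = 0"
  by (cases x) (auto simp: esq_def)

lemma esq_mult: "esq (a * b) = esq a * esq b"
proof (cases a rule: ennreal_cases)
  case (real r)
  show ?thesis
  proof (cases b rule: ennreal_cases)
    case (real s)
    have "esq (a * b) = esq (ennreal (r * s))" using real `a = ennreal r` `0 \<le> r`
      by (simp add: ennreal_mult)
    also have "\<dots> = ennreal (sqrt r * sqrt s)" using real `0 \<le> r`
      by (simp add: real_sqrt_mult)
    also have "\<dots> = esq a * esq b" using real `a = ennreal r` `0 \<le> r`
      by (simp add: ennreal_mult)
    finally show ?thesis .
  next
    case top
    show ?thesis
    proof (cases "r = 0")
      case True then show ?thesis using top `a = ennreal r` by simp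
    next
      case False
      then have "a \<noteq> 0" "esq a \<noteq> 0" using `a = ennreal r` `0 \<le> r` by auto
      then show ?thesis using top by (simp add: ennreal_mult_top)
    qed
  qed
next
  case top
  show ?thesis
  proof (cases "b = 0")
    case True then show ?thesis using top by simp
  next
    case False
    then have "esq b \<noteq> 0" by simp
    then show ?thesis using top False by (simp add: ennreal_top_mult)
  qed
qed

lemma esq_sq: "esq a * esq a = a"
proof (cases a rule: ennreal_cases)
  case (real r)
  then show ?thesis by (simp add: ennreal_mult[symmetric])
qed simp

lemma esq_sq': "esq (a * a) = a"
  by (simp add: esq_mult esq_sq)

lemma esq_power2: "esq a ^ 2 = a"
  by (simp add: power2_eq_square esq_sq)

lemma esq_mono: "a \<le> b \<Longrightarrow> esq a \<le> esq b"
proof (cases b rule: ennreal_cases)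
  case (real s)
  assume ab: "a \<le> b"
  then obtain r where r: "a = ennreal r" "0 \<le> r" using real
    by (metis ennreal_cases ennreal_neq_top top_unique)
  then have "r \<le> s" using ab real by simp
  then show ?thesis using r real by (simp add: ennreal_leI)
qed simp

lemma esq_less_top[simp]: "esq a < top \<longleftrightarrow> a < top"
  by (cases a rule: ennreal_cases) simp_all

lemma borel_measurable_esq[measurable]:
  "f \<in> borel_measurable M \<Longrightarrow> (\<lambda>x. esq (f x)) \<in> borel_measurable M"
proof -
  assume f: "f \<in> borel_measurable M"
  have "f -` {\<top>} \<inter> space M \<in> sets M"
    by (rule measurable_sets[OF f]) simp
  moreover have "f -` {\<top>} \<inter> space M = {x \<in> space M. f x = \<top>}" by auto
  ultimately have [measurable]: "{x \<in> space M. f x = \<top>} \<in> sets M" by simp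
  show ?thesis unfolding esq_def using f by measurable
qed


lemma sum_meas_density:
  assumes [measurable]: "f \<in> borel_measurable \<nu>" "g \<in> borel_measurable \<nu>"
  shows "sum_meas (density \<nu> f) (density \<nu> g) = density \<nu> (\<lambda>x. f x + g x)"
proof -
  let ?N = "density \<nu> (\<lambda>x. f x + g x)"
  have "sum_meas (density \<nu> f) (density \<nu> g) =
     measure_of (space \<nu>) (sets \<nu>) (\<lambda>A. emeasure (density \<nu> f) A + emeasure (density \<nu> g) A)"
    by (simp add: sum_meas_def)
  also have "\<dots> = measure_of (space \<nu>) (sets \<nu>) (emeasure ?N)"
  proof (rule measure_of_eq)
    show "sets \<nu> \<subseteq> Pow (space \<nu>)" by (rule sets.space_closed)
    fix a assume "a \<in> sigma_sets (space \<nu>) (sets \<nu>)"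
    then have "a \<in> sets \<nu>" by (simp add: sets.sigma_sets_eq)
    then show "emeasure (density \<nu> f) a + emeasure (density \<nu> g) a = emeasure ?N a"
      by (rule emeasure_density_add) simp_all
  qed
  also have "\<dots> = ?N"
    using measure_of_of_measure[of ?N] by simp
  finally show ?thesis .
qed

lemma AE_RN_density:
  assumes "sigma_finite_measure \<nu>" "f \<in> borel_measurable \<nu>"
  shows "AE x in \<nu>. RN_deriv \<nu> (density \<nu> f) x = f x"
  using sigma_finite_measure.RN_deriv_unique[OF assms refl] by (auto elim!: AE_mp)

lemma AE_density_fin:
  assumes "sigma_finite_measure \<nu>" "f \<in> borel_measurable \<nu>" "finite_measure (density \<nu> f)"
  shows "AE x in \<nu>. f x \<noteq> top"
  using sigma_finite_measure.sigma_finite_iff_density_finite[OF assms(1,2)] assms(3)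
    finite_measure.axioms(1) by (auto simp: infinity_ennreal_def)

definition BCe :: "'a measure \<Rightarrow> ('a \<Rightarrow> ennreal) \<Rightarrow> ('a \<Rightarrow> ennreal) \<Rightarrow> ennreal" where
  "BCe \<nu> f g = (\<integral>\<^sup>+x. esq (f x * g x) \<partial>\<nu>)"

lemma sq_identity_real:
  fixes a b :: real assumes "0 \<le> a" "0 \<le> b"
  shows "ennreal ((sqrt a - sqrt b)\<^sup>2) + 2 * ennreal (sqrt (a * b)) = ennreal a + ennreal b"
proof -
  have "(sqrt a - sqrt b)\<^sup>2 + 2 * sqrt (a * b) = a + b"
    using assms by (simp add: power2_diff real_sqrt_mult)
  moreover have "0 \<le> (sqrt a - sqrt b)\<^sup>2" "0 \<le> 2 * sqrt (a * b)" using assms by auto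
  ultimately show ?thesis using assms
    by (metis ennreal_plus ennreal_mult' ennreal_numeral zero_le_numeral real_sqrt_ge_zero mult_nonneg_nonneg)
qed

lemma prob_density_int:
  assumes "prob_space (density \<nu> f)" "f \<in> borel_measurable \<nu>"
  shows "(\<integral>\<^sup>+x. f x \<partial>\<nu>) = 1"
proof -
  have "emeasure (density \<nu> f) (space (density \<nu> f)) = 1"
    using assms(1) prob_space.emeasure_space_1 by blast
  then show ?thesis using assms(2) by (simp add: emeasure_density)
qed

lemma hell_core:
  assumes nu: "sigma_finite_measure \<nu>"
    and [measurable]: "f \<in> borel_measurable \<nu>" "g \<in> borel_measurable \<nu>"
    and P: "prob_space (density \<nu> f)" and Q: "prob_space (density \<nu> g)"
  shows "(\<integral>\<^sup>+x. ennreal ((sqrt (rd \<nu> (density \<nu> f) x) - sqrt (rd \<nu> (density \<nu> g) x))\<^sup>2) \<partial>\<nu>)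
           + 2 * BCe \<nu> f g = 2"
    and "BCe \<nu> f g \<le> 1"
    and "hellinger_wrt \<nu> (density \<nu> f) (density \<nu> g) = sqrt (1 - enn2real (BCe \<nu> f g))"
proof -
  let ?X = "\<integral>\<^sup>+x. ennreal ((sqrt (rd \<nu> (density \<nu> f) x) - sqrt (rd \<nu> (density \<nu> g) x))\<^sup>2) \<partial>\<nu>"
  have ff: "AE x in \<nu>. f x \<noteq> top"
    by (rule AE_density_fin[OF nu]) (use P prob_space.finite_measure in auto)
  have gf: "AE x in \<nu>. g x \<noteq> top"
    by (rule AE_density_fin[OF nu]) (use Q prob_space.finite_measure in auto)
  have rf: "AE x in \<nu>. RN_deriv \<nu> (density \<nu> f) x = f x" by (rule AE_RN_density[OF nu]) simp
  have rg: "AE x in \<nu>. RN_deriv \<nu> (density \<nu> g) x = g x" by (rule AE_RN_density[OF nu]) simp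
  have pw: "AE x in \<nu>. ennreal ((sqrt (rd \<nu> (density \<nu> f) x) - sqrt (rd \<nu> (density \<nu> g) x))\<^sup>2)
      + 2 * esq (f x * g x) = f x + g x"
    using ff gf rf rg
  proof eventually_elim
    case (elim x)
    obtain a where a: "f x = ennreal a" "0 \<le> a" using elim(1) by (cases "f x" rule: ennreal_cases) auto
    obtain b where b: "g x = ennreal b" "0 \<le> b" using elim(2) by (cases "g x" rule: ennreal_cases) auto
    have "esq (f x * g x) = ennreal (sqrt (a * b))"
      using a b by (simp add: ennreal_mult[symmetric])
    then show ?case using a b elim(3,4) sq_identity_real[OF a(2) b(2)] by (simp add: rd_def)
  qed
  have "?X + 2 * BCe \<nu> f g = (\<integral>\<^sup>+x. ennreal ((sqrt (rd \<nu> (density \<nu> f) x) - sqrt (rd \<nu> (density \<nu> g) x))\<^sup>2)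
      + 2 * esq (f x * g x) \<partial>\<nu>)"
    unfolding BCe_def by (simp add: nn_integral_add nn_integral_cmult rd_def)
  also have "\<dots> = (\<integral>\<^sup>+x. f x + g x \<partial>\<nu>)"
    by (rule nn_integral_cong_AE[OF pw])
  also have "\<dots> = 2" using prob_density_int[OF P] prob_density_int[OF Q]
    by (simp add: nn_integral_add one_add_one)
  finally show eq: "?X + 2 * BCe \<nu> f g = 2" .
  show le1: "BCe \<nu> f g \<le> 1"
  proof (rule ccontr)
    assume "\<not> BCe \<nu> f g \<le> 1"
    then have "1 < BCe \<nu> f g" by simp
    then have "2 * 1 < 2 * BCe \<nu> f g"
      by (intro ennreal_mult_strict_left_mono) auto
    also have "\<dots> \<le> ?X + 2 * BCe \<nu> f g" by simp
    finally show False using eq by simp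
  qed
  have Xfin: "?X \<le> 2" using eq by (metis le_iff_add)
  have "enn2real ?X + 2 * enn2real (BCe \<nu> f g) = 2"
  proof -
    have "enn2real (?X + 2 * BCe \<nu> f g) = enn2real ?X + enn2real (2 * BCe \<nu> f g)"
    proof (rule enn2real_plus)
      show "?X < top" using order.strict_trans1[OF Xfin] by simp
      have "BCe \<nu> f g < top" using order.strict_trans1[OF le1] by simp
      then show "2 * BCe \<nu> f g < top" by (simp add: ennreal_mult_less_top)
    qed
    then show ?thesis using eq by (simp add: enn2real_mult)
  qed
  then show "hellinger_wrt \<nu> (density \<nu> f) (density \<nu> g) = sqrt (1 - enn2real (BCe \<nu> f g))"
    unfolding hellinger_wrt_def by (simp add: algebra_simps)
qed


lemma frac_mult_back:
  fixes a b :: ennreal assumes "a \<noteq> top" "b \<noteq> top"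
  shows "(a + b) * (a / (a + b)) = a"
proof (cases "a + b = 0")
  case True then show ?thesis by simp
next
  case False
  have "(a + b) * (a / (a + b)) = (a * (a + b)) / (a + b)"
    by (simp add: ennreal_times_divide mult.commute)
  also have "\<dots> = a" using False assms by (intro ennreal_mult_divide_eq) auto
  finally show ?thesis .
qed

lemma frac_esq_back:
  fixes a b :: ennreal assumes "a \<noteq> top" "b \<noteq> top"
  shows "(a + b) * esq (a / (a + b) * (b / (a + b))) = esq (a * b)"
proof (cases "a + b = 0")
  case True then show ?thesis by simp
next
  case False
  let ?s = "a + b"
  have st: "?s \<noteq> top" using assms by simp
  have "a / ?s * (b / ?s) = (a * b) * (inverse ?s * inverse ?s)"
    by (simp add: divide_ennreal_def ac_simps)
  then have "esq (a / ?s * (b / ?s)) = esq (a * b) * inverse ?s"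
    by (simp add: esq_mult esq_sq)
  then have "?s * esq (a / ?s * (b / ?s)) = esq (a * b) * (?s * inverse ?s)"
    by (simp add: ac_simps)
  also have "?s * inverse ?s = 1"
    using ennreal_divide_self[of ?s] False st by (simp add: divide_ennreal_def top.not_eq_extremum)
  finally show ?thesis by simp
qed

lemma hell_eq:
  assumes nu: "sigma_finite_measure \<nu>"
    and [measurable]: "f \<in> borel_measurable \<nu>" "g \<in> borel_measurable \<nu>"
    and P: "prob_space (density \<nu> f)" and Q: "prob_space (density \<nu> g)"
  shows "hellinger (density \<nu> f) (density \<nu> g) = sqrt (1 - enn2real (BCe \<nu> f g))"
    and "BCe \<nu> f g \<le> 1"
proof -
  show "BCe \<nu> f g \<le> 1" by (rule hell_core(2)[OF assms])
  have ff: "AE x in \<nu>. f x \<noteq> top"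
    by (rule AE_density_fin[OF nu]) (use P prob_space.finite_measure in auto)
  have gf: "AE x in \<nu>. g x \<noteq> top"
    by (rule AE_density_fin[OF nu]) (use Q prob_space.finite_measure in auto)
  define \<mu> where "\<mu> = density \<nu> (\<lambda>x. f x + g x)"
  define f' where "f' x = f x / (f x + g x)" for x
  define g' where "g' x = g x / (g x + f x)" for x
  have [measurable]: "f' \<in> borel_measurable \<nu>" "g' \<in> borel_measurable \<nu>"
    unfolding f'_def g'_def by measurable
  have mf[measurable]: "f' \<in> borel_measurable \<mu>" "g' \<in> borel_measurable \<mu>"
    unfolding \<mu>_def by simp_all
  have smu: "sigma_finite_measure \<mu>"
    unfolding \<mu>_def
    using sigma_finite_measure.sigma_finite_iff_density_finite[OF nu, of "\<lambda>x. f x + g x"] ff gf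
    by (auto elim: AE_mp)
  have dP: "density \<mu> f' = density \<nu> f"
  proof -
    have "density \<mu> f' = density \<nu> (\<lambda>x. (f x + g x) * f' x)"
      unfolding \<mu>_def by (rule density_density_eq) simp_all
    also have "\<dots> = density \<nu> f"
      by (rule density_cong) (use ff gf in \<open>auto simp: f'_def frac_mult_back elim!: AE_mp\<close>)
    finally show ?thesis .
  qed
  have dQ: "density \<mu> g' = density \<nu> g"
  proof -
    have "density \<mu> g' = density \<nu> (\<lambda>x. (g x + f x) * g' x)"
      unfolding \<mu>_def by (subst density_density_eq) (simp_all add: add.commute)
    also have "\<dots> = density \<nu> g"
      by (rule density_cong) (use ff gf in \<open>auto simp: g'_def frac_mult_back elim!: AE_mp\<close>)
    finally show ?thesis .
  qed
  have "hellinger (density \<nu> f) (density \<nu> g) = hellinger_wrt \<mu> (density \<mu> f') (density \<mu> g')"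
    unfolding hellinger_def using sum_meas_density[of f \<nu> g] dP dQ by (simp add: \<mu>_def[symmetric])
  also have "\<dots> = sqrt (1 - enn2real (BCe \<mu> f' g'))"
    by (rule hell_core(3)[OF smu mf]) (simp_all add: dP dQ P Q)
  also have "BCe \<mu> f' g' = BCe \<nu> f g"
  proof -
    have "BCe \<mu> f' g' = (\<integral>\<^sup>+x. (f x + g x) * esq (f' x * g' x) \<partial>\<nu>)"
      unfolding BCe_def \<mu>_def by (simp add: nn_integral_density)
    also have "\<dots> = BCe \<nu> f g"
      unfolding BCe_def
      by (rule nn_integral_cong_AE) (use ff gf in \<open>auto simp: f'_def g'_def frac_esq_back add.commute elim!: AE_mp\<close>)
    finally show ?thesis .
  qed
  finally show "hellinger (density \<nu> f) (density \<nu> g) = sqrt (1 - enn2real (BCe \<nu> f g))" .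
qed


lemma esq_enn2real:
  assumes "a \<noteq> top" "b \<noteq> top"
  shows "ennreal (sqrt (enn2real a * enn2real b)) = esq (a * b)"
  using assms
  by (cases a rule: ennreal_cases; cases b rule: ennreal_cases) (simp_all add: ennreal_mult[symmetric])

lemma key_H2_real:
  fixes zp zq bc i d :: real
  assumes "0 \<le> zp" "0 \<le> zq" "0 \<le> bc" "0 \<le> i" "0 \<le> d" "d + 2 * bc = 2"
    and "zp + zq \<le> sqrt (zp * zq) * d + 2 * i"
  shows "sqrt (zp * zq) * bc \<le> i"
proof -
  have "0 \<le> (sqrt zp - sqrt zq)\<^sup>2" by simp
  then have "2 * sqrt (zp * zq) \<le> zp + zq"
    using assms(1,2) by (simp add: power2_diff real_sqrt_mult)
  then have "2 * sqrt (zp * zq) \<le> sqrt (zp * zq) * (2 - 2 * bc) + 2 * i"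
    using assms(6,7) by (smt (verit))
  then show ?thesis by (simp add: algebra_simps)
qed

lemma key_H2:
  fixes Zp Zq BC I D GD Gn :: ennreal
  assumes "Zp < top" "Zq < top" "D + 2 * BC = 2" "GD + 2 * I = Zp + Zq"
    "GD \<le> Gn * D" "Gn \<le> esq (Zp * Zq)"
  shows "esq (Zp * Zq) * BC \<le> I"
proof -
  have "BC \<le> 1"
  proof (rule ccontr)
    assume "\<not> BC \<le> 1"
    then have "1 < BC" by simp
    then have "2 * 1 < 2 * BC" by (intro ennreal_mult_strict_left_mono) auto
    also have "\<dots> \<le> D + 2 * BC" by simp
    finally show False using assms(3) by simp
  qed
  then have "BC < top" by (rule le_less_trans) simp
  have "D \<le> D + 2 * BC" using le_iff_add by blast
  then have "D \<le> 2" using assms(3) by simp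
  then have "D < top" by (rule le_less_trans) simp
  have "2 * I \<le> GD + 2 * I" using le_iff_add add.commute by metis
  then have "2 * I \<le> Zp + Zq" using assms(4) by simp
  moreover have "Zp + Zq < top" using assms(1,2) by simp
  ultimately have "2 * I < top" by (rule le_less_trans)
  then have "I < top"
  proof (rule contrapos_pp)
    assume "\<not> I < top" then have "I = top" using top.not_eq_extremum by blast
    then show "\<not> 2 * I < top" by (simp add: ennreal_mult_top)
  qed
  obtain zp where zp: "Zp = ennreal zp" "0 \<le> zp" using assms(1) by (cases Zp rule: ennreal_cases) auto
  obtain zq where zq: "Zq = ennreal zq" "0 \<le> zq" using assms(2) by (cases Zq rule: ennreal_cases) auto
  obtain bc where bc: "BC = ennreal bc" "0 \<le> bc" using `BC < top` by (cases BC rule: ennreal_cases) auto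
  obtain d where d: "D = ennreal d" "0 \<le> d" using `D < top` by (cases D rule: ennreal_cases) auto
  obtain i where i: "I = ennreal i" "0 \<le> i" using `I < top` by (cases I rule: ennreal_cases) auto
  have R: "esq (Zp * Zq) = ennreal (sqrt (zp * zq))" using zp zq by (simp add: ennreal_mult[symmetric])
  have "ennreal (d + 2 * bc) = D + 2 * BC" using d bc by (simp add: ennreal_plus ennreal_mult')
  then have "ennreal (d + 2 * bc) = ennreal 2" using assms(3) by simp
  then have d2: "d + 2 * bc = 2" using d bc by (subst (asm) ennreal_inj) auto
  have "Zp + Zq = GD + 2 * I" using assms(4) by simp
  also have "\<dots> \<le> Gn * D + 2 * I" using assms(5) by (rule add_right_mono)
  also have "\<dots> \<le> esq (Zp * Zq) * D + 2 * I" using assms(6) by (intro add_right_mono mult_right_mono) auto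
  also have "\<dots> = ennreal (sqrt (zp * zq) * d + 2 * i)"
    using d i R zp zq by (subst ennreal_plus) (auto simp: ennreal_mult')
  finally have "ennreal (zp + zq) \<le> ennreal (sqrt (zp * zq) * d + 2 * i)"
    using zp zq by (simp add: ennreal_plus)
  then have "zp + zq \<le> sqrt (zp * zq) * d + 2 * i"
    using zp zq d i by (subst (asm) ennreal_le_iff) auto
  then have "sqrt (zp * zq) * bc \<le> i" by (rule key_H2_real[OF zp(2) zq(2) bc(2) i(2) d(2) d2])
  then have le: "ennreal (sqrt (zp * zq) * bc) \<le> ennreal i" by (rule ennreal_leI)
  have "esq (Zp * Zq) * BC = ennreal (sqrt (zp * zq) * bc)" using R bc zp zq by (simp add: ennreal_mult')
  with le i show ?thesis by simp
qed


lemma normalize_density: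
  assumes [measurable]: "F \<in> borel_measurable L"
  shows "normalize (density L F) = density L (\<lambda>x. F x * (1 / (\<integral>\<^sup>+x. F x \<partial>L)))"
proof -
  have "evidence (density L F) = (\<integral>\<^sup>+x. F x \<partial>L)"
    unfolding evidence_def by (simp add: emeasure_density)
  then show ?thesis unfolding normalize_def by (simp add: density_density_eq)
qed

lemma prob_norm:
  assumes [measurable]: "F \<in> borel_measurable L"
    and "0 < (\<integral>\<^sup>+x. F x \<partial>L)" "(\<integral>\<^sup>+x. F x \<partial>L) < top"
  shows "prob_space (density L (\<lambda>x. F x * (1 / (\<integral>\<^sup>+x. F x \<partial>L))))"
proof (rule prob_spaceI)
  let ?Z = "\<integral>\<^sup>+x. F x \<partial>L"
  have "emeasure (density L (\<lambda>x. F x * (1 / ?Z))) (space (density L (\<lambda>x. F x * (1 / ?Z))))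
      = (\<integral>\<^sup>+x. F x * (1 / ?Z) \<partial>L)"
    by (simp add: emeasure_density)
  also have "\<dots> = ?Z * (1 / ?Z)" by (simp add: nn_integral_multc)
  also have "\<dots> = 1" using assms(2,3) by (simp add: ennreal_times_divide)
  finally show "emeasure (density L (\<lambda>x. F x * (1 / ?Z))) (space (density L (\<lambda>x. F x * (1 / ?Z)))) = 1" .
qed

lemma inv_cancel_enn:
  fixes Z :: ennreal assumes "0 < Z" "Z < top"
  shows "1 / Z * Z = 1"
  using assms by (simp add: ennreal_divide_times)

lemma post_bound:
  assumes nu: "sigma_finite_measure \<nu>"
    and Pac: "absolutely_continuous \<nu> P" "sets P = sets \<nu>" "prob_space P"
    and Qac: "absolutely_continuous \<nu> Q" "sets Q = sets \<nu>" "prob_space Q"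
    and gm[measurable]: "g \<in> borel_measurable \<nu>"
    and H: "hypH1 g \<nu> P Q \<or> hypH2 g \<nu> P Q"
    and lam: "sigma_finite_measure L"
    and Fm[measurable]: "F \<in> borel_measurable L" and Gm[measurable]: "G \<in> borel_measurable L"
    and ZP: "(\<integral>\<^sup>+x. F x \<partial>L) = (\<integral>\<^sup>+x. g x \<partial>P)"
    and ZQ: "(\<integral>\<^sup>+x. G x \<partial>L) = (\<integral>\<^sup>+x. g x \<partial>Q)"
    and ZP0: "0 < (\<integral>\<^sup>+x. g x \<partial>P)" "(\<integral>\<^sup>+x. g x \<partial>P) < top"
    and ZQ0: "0 < (\<integral>\<^sup>+x. g x \<partial>Q)" "(\<integral>\<^sup>+x. g x \<partial>Q) < top"
    and CS: "(\<integral>\<^sup>+x. g x * esq (RN_deriv \<nu> P x * RN_deriv \<nu> Q x) \<partial>\<nu>) \<le> (\<integral>\<^sup>+x. esq (F x * G x) \<partial>L)"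
  shows "hellinger (normalize (density L F)) (normalize (density L G)) \<le> hellinger P Q"
proof -
  define p where "p = RN_deriv \<nu> P"
  define q where "q = RN_deriv \<nu> Q"
  have pm[measurable]: "p \<in> borel_measurable \<nu>" "q \<in> borel_measurable \<nu>"
    unfolding p_def q_def by simp_all
  have Pd: "P = density \<nu> p"
    unfolding p_def using sigma_finite_measure.density_RN_deriv[OF nu Pac(1,2)] by simp
  have Qd: "Q = density \<nu> q"
    unfolding q_def using sigma_finite_measure.density_RN_deriv[OF nu Qac(1,2)] by simp
  have Pp: "prob_space (density \<nu> p)" using Pac(3) Pd by simp
  have Qp: "prob_space (density \<nu> q)" using Qac(3) Qd by simp
  define BC where "BC = BCe \<nu> p q"
  have hP: "hellinger P Q = sqrt (1 - enn2real BC)" and BC1: "BC \<le> 1"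
    using hell_eq[OF nu pm Pp Qp] Pd Qd by (simp_all add: BC_def)
  define Zp where "Zp = (\<integral>\<^sup>+x. g x \<partial>P)"
  define Zq where "Zq = (\<integral>\<^sup>+x. g x \<partial>Q)"
  define Fc where "Fc x = F x * (1 / Zp)" for x
  define Gc where "Gc x = G x * (1 / Zq)" for x
  have [measurable]: "Fc \<in> borel_measurable L" "Gc \<in> borel_measurable L"
    unfolding Fc_def Gc_def by simp_all
  have nP: "normalize (density L F) = density L Fc"
    unfolding Fc_def Zp_def using normalize_density[OF Fm] ZP by simp
  have nQ: "normalize (density L G) = density L Gc"
    unfolding Gc_def Zq_def using normalize_density[OF Gm] ZQ by simp
  have pk: "prob_space (density L Fc)"
    unfolding Fc_def Zp_def using prob_norm[OF Fm] ZP ZP0 by simp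
  have qk: "prob_space (density L Gc)"
    unfolding Gc_def Zq_def using prob_norm[OF Gm] ZQ ZQ0 by simp
  define BCk where "BCk = BCe L Fc Gc"
  have hk: "hellinger (normalize (density L F)) (normalize (density L G)) = sqrt (1 - enn2real BCk)"
    and BCk1: "BCk \<le> 1"
    using hell_eq[OF lam _ _ pk qk] nP nQ by (simp_all add: BCk_def)
  define I where "I = (\<integral>\<^sup>+x. g x * esq (p x * q x) \<partial>\<nu>)"
  have BCk_eq: "BCk = esq (1 / Zp * (1 / Zq)) * (\<integral>\<^sup>+x. esq (F x * G x) \<partial>L)"
  proof -
    have "BCk = (\<integral>\<^sup>+x. esq (1 / Zp * (1 / Zq)) * esq (F x * G x) \<partial>L)"
      unfolding BCk_def BCe_def Fc_def Gc_def by (simp add: esq_mult[symmetric] ac_simps)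
    also have "\<dots> = esq (1 / Zp * (1 / Zq)) * (\<integral>\<^sup>+x. esq (F x * G x) \<partial>L)"
      by (rule nn_integral_cmult) simp
    finally show ?thesis .
  qed
  have key: "esq (Zp * Zq) * BC \<le> I"
  proof -
    have pf: "AE x in \<nu>. p x \<noteq> top"
      by (rule AE_density_fin[OF nu pm(1)]) (use Pp prob_space.finite_measure in auto)
    have qf: "AE x in \<nu>. q x \<noteq> top"
      by (rule AE_density_fin[OF nu pm(2)]) (use Qp prob_space.finite_measure in auto)
    have rdP: "rd \<nu> P x = enn2real (p x)" for x by (simp add: rd_def p_def)
    have rdQ: "rd \<nu> Q x = enn2real (q x)" for x by (simp add: rd_def q_def)
    have BCw: "(\<integral>\<^sup>+x. ennreal (sqrt (rd \<nu> P x * rd \<nu> Q x)) \<partial>\<nu>) = BC"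
      unfolding BC_def BCe_def rdP rdQ
      by (rule nn_integral_cong_AE) (use pf qf in \<open>auto simp: esq_enn2real elim!: AE_mp\<close>)
    have Iw: "(\<integral>\<^sup>+x. g x * ennreal (sqrt (rd \<nu> P x * rd \<nu> Q x)) \<partial>\<nu>) = I"
      unfolding I_def rdP rdQ
      by (rule nn_integral_cong_AE) (use pf qf in \<open>auto simp: esq_enn2real elim!: AE_mp\<close>)
    have Zfin: "Zp < top" "Zq < top" using ZP0 ZQ0 by (simp_all add: Zp_def Zq_def)
    have esqZ: "ennreal (sqrt (enn2real (\<integral>\<^sup>+x. g x \<partial>P) * enn2real (\<integral>\<^sup>+x. g x \<partial>Q))) = esq (Zp * Zq)"
      unfolding Zp_def[symmetric] Zq_def[symmetric] using Zfin by (simp add: esq_enn2real)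
    define Gn where "Gn = (\<integral>\<^sup>+x. g x \<partial>\<nu>)"
    show ?thesis
    proof (cases "hypH1 g \<nu> P Q")
      case True
      then have a: "Gn * BC \<le> I" and b: "esq (Zp * Zq) \<le> Gn"
        unfolding hypH1_def BCw Iw esqZ Gn_def by simp_all
      have "esq (Zp * Zq) * BC \<le> Gn * BC" using b by (rule mult_right_mono) simp
      then show ?thesis using a by simp
    next
      case False
      then have H2: "hypH2 g \<nu> P Q" using H by simp
      define X where "X x = ennreal ((sqrt (rd \<nu> P x) - sqrt (rd \<nu> Q x))\<^sup>2)" for x
      have [measurable]: "X \<in> borel_measurable \<nu>" unfolding X_def rdP rdQ by simp
      define D where "D = (\<integral>\<^sup>+x. X x \<partial>\<nu>)"
      define GD where "GD = (\<integral>\<^sup>+x. g x * X x \<partial>\<nu>)"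
      have a: "GD \<le> Gn * D" and b: "Gn \<le> esq (Zp * Zq)"
        using H2 unfolding hypH2_def esqZ Gn_def GD_def D_def X_def by simp_all
      have D2: "D + 2 * BC = 2"
        using hell_core(1)[OF nu pm Pp Qp] Pd Qd unfolding D_def X_def BC_def by simp
      have pw: "AE x in \<nu>. X x + 2 * esq (p x * q x) = p x + q x"
        using pf qf
      proof eventually_elim
        case (elim x)
        obtain a where a: "p x = ennreal a" "0 \<le> a" using elim(1) by (cases "p x" rule: ennreal_cases) auto
        obtain b where b: "q x = ennreal b" "0 \<le> b" using elim(2) by (cases "q x" rule: ennreal_cases) auto
        have "esq (p x * q x) = ennreal (sqrt (a * b))"
          using a b by (simp add: ennreal_mult[symmetric])
        then show ?case using a b sq_identity_real[OF a(2) b(2)] by (simp add: X_def rdP rdQ)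
      qed
      have "GD + 2 * I = (\<integral>\<^sup>+x. g x * X x + 2 * (g x * esq (p x * q x)) \<partial>\<nu>)"
        unfolding GD_def I_def by (simp add: nn_integral_add nn_integral_cmult)
      also have "\<dots> = (\<integral>\<^sup>+x. p x * g x + q x * g x \<partial>\<nu>)"
      proof (rule nn_integral_cong_AE)
        show "AE x in \<nu>. g x * X x + 2 * (g x * esq (p x * q x)) = p x * g x + q x * g x"
          using pw
        proof eventually_elim
          case (elim x)
          have "g x * X x + 2 * (g x * esq (p x * q x)) = g x * (X x + 2 * esq (p x * q x))"
            by (simp add: distrib_left ac_simps)
          also have "\<dots> = g x * (p x + q x)" using elim by simp
          finally show ?case by (simp add: distrib_left ac_simps)
        qed
      qed
      also have "\<dots> = Zp + Zq"
      proof -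
        have "(\<integral>\<^sup>+x. g x \<partial>P) = (\<integral>\<^sup>+x. p x * g x \<partial>\<nu>)"
          by (subst Pd) (simp add: nn_integral_density)
        moreover have "(\<integral>\<^sup>+x. g x \<partial>Q) = (\<integral>\<^sup>+x. q x * g x \<partial>\<nu>)"
          by (subst Qd) (simp add: nn_integral_density)
        ultimately show ?thesis unfolding Zp_def Zq_def by (simp add: nn_integral_add)
      qed
      finally have E: "GD + 2 * I = Zp + Zq" .
      show ?thesis by (rule key_H2[OF Zfin D2 E a b])
    qed
  qed
  have one: "esq (1 / Zp * (1 / Zq)) * esq (Zp * Zq) = 1"
  proof -
    have "1 / Zp * (1 / Zq) * (Zp * Zq) = (1 / Zp * Zp) * (1 / Zq * Zq)" by (simp add: ac_simps)
    also have "\<dots> = 1" using ZP0 ZQ0 by (simp add: inv_cancel_enn Zp_def Zq_def)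
    finally show ?thesis by (simp add: esq_mult[symmetric])
  qed
  have "BC = esq (1 / Zp * (1 / Zq)) * (esq (Zp * Zq) * BC)"
    using one by (simp add: mult.assoc[symmetric])
  also have "\<dots> \<le> esq (1 / Zp * (1 / Zq)) * I" using key by (rule mult_left_mono) simp
  also have "\<dots> \<le> BCk" unfolding BCk_eq using CS by (simp add: I_def p_def q_def mult_left_mono)
  finally have "BC \<le> BCk" .
  then have "enn2real BC \<le> enn2real BCk" using BCk1 by (intro enn2real_mono) (auto intro: le_less_trans)
  then show ?thesis unfolding hk hP by simp
qed


lemma CS_kernel:
  assumes [measurable]: "K \<in> borel_measurable N" "p \<in> borel_measurable N" "q \<in> borel_measurable N"
  shows "(\<integral>\<^sup>+x. K x * esq (p x * q x) \<partial>N) \<le> esq ((\<integral>\<^sup>+x. K x * p x \<partial>N) * (\<integral>\<^sup>+x. K x * q x \<partial>N))"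
proof -
  define u where "u x = esq (K x) * esq (p x)" for x
  define v where "v x = esq (K x) * esq (q x)" for x
  have [measurable]: "u \<in> borel_measurable N" "v \<in> borel_measurable N" unfolding u_def v_def by simp_all
  have uv: "u x * v x = K x * esq (p x * q x)" for x
  proof -
    have "u x * v x = (esq (K x) * esq (K x)) * esq (p x * q x)"
      unfolding u_def v_def by (simp add: esq_mult ac_simps)
    then show ?thesis by (simp add: esq_sq)
  qed
  have u2: "u x ^ 2 = K x * p x" for x
  proof -
    have "u x ^ 2 = (esq (K x) * esq (K x)) * (esq (p x) * esq (p x))"
      unfolding u_def power2_eq_square by (simp add: ac_simps)
    then show ?thesis by (simp add: esq_sq)
  qed
  have v2: "v x ^ 2 = K x * q x" for x
  proof -
    have "v x ^ 2 = (esq (K x) * esq (K x)) * (esq (q x) * esq (q x))"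
      unfolding v_def power2_eq_square by (simp add: ac_simps)
    then show ?thesis by (simp add: esq_sq)
  qed
  have "(\<integral>\<^sup>+x. u x * v x \<partial>N)\<^sup>2 \<le> (\<integral>\<^sup>+x. u x ^ 2 \<partial>N) * (\<integral>\<^sup>+x. v x ^ 2 \<partial>N)"
    by (rule Cauchy_Schwarz_nn_integral) simp_all
  then have "esq ((\<integral>\<^sup>+x. u x * v x \<partial>N)\<^sup>2) \<le> esq ((\<integral>\<^sup>+x. K x * p x \<partial>N) * (\<integral>\<^sup>+x. K x * q x \<partial>N))"
    unfolding u2 v2 by (rule esq_mono)
  then show ?thesis unfolding uv by (simp add: power2_eq_square esq_sq')
qed

lemma Mbar_sf: "\<nu> \<in> Mbar_borel \<Longrightarrow> sigma_finite_measure \<nu>"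
  by (simp add: Mbar_borel_def)

lemma Mbar_sets: "\<nu> \<in> Mbar_borel \<Longrightarrow> sets \<nu> = sets borel"
  by (simp add: Mbar_borel_def)

lemma hyp_ac:
  assumes "hypH1 g \<nu> P Q \<or> hypH2 g \<nu> P Q"
  shows "absolutely_continuous \<nu> P" "absolutely_continuous \<nu> Q"
  using assms unfolding hypH1_def hypH2_def by auto

lemma IP_case:
  fixes h :: "'y \<Rightarrow> 'x::polish_space \<Rightarrow> real"
  assumes model: "IP_model h y" and aP: "IP_adm h y P" and aQ: "IP_adm h y Q"
    and nuM: "\<nu> \<in> Mbar_borel" and H: "hypH1 (IP_g h y) \<nu> P Q \<or> hypH2 (IP_g h y) \<nu> P Q"
  shows "hellinger (IP_post h y P) (IP_post h y Q) \<le> hellinger P Q"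
proof -
  have nu: "sigma_finite_measure \<nu>" by (rule Mbar_sf[OF nuM])
  have snu: "sets \<nu> = sets borel" by (rule Mbar_sets[OF nuM])
  have sP: "sets P = sets \<nu>" using aP snu by (simp add: IP_adm_def)
  have sQ: "sets Q = sets \<nu>" using aQ snu by (simp add: IP_adm_def)
  have hm: "h y \<in> borel_measurable \<nu>"
    using model by (simp add: IP_model_def measurable_cong_sets[OF snu refl])
  note [measurable] = hm
  have gm[measurable]: "IP_g h y \<in> borel_measurable \<nu>"
    unfolding IP_g_def[abs_def] by simp
  define p where "p = RN_deriv \<nu> P"
  define q where "q = RN_deriv \<nu> Q"
  have pm[measurable]: "p \<in> borel_measurable \<nu>" "q \<in> borel_measurable \<nu>"
    unfolding p_def q_def by simp_all
  have Pd: "P = density \<nu> p"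
    unfolding p_def using sigma_finite_measure.density_RN_deriv[OF nu hyp_ac(1)[OF H] sP] by simp
  have Qd: "Q = density \<nu> q"
    unfolding q_def using sigma_finite_measure.density_RN_deriv[OF nu hyp_ac(2)[OF H] sQ] by simp
  define F where "F x = p x * ennreal (h y x)" for x
  define G where "G x = q x * ennreal (h y x)" for x
  have [measurable]: "F \<in> borel_measurable \<nu>" "G \<in> borel_measurable \<nu>" unfolding F_def G_def by simp_all
  have tP: "IP_tilde h y P = density \<nu> F"
    unfolding IP_tilde_def F_def by (subst Pd) (simp add: density_density_eq)
  have tQ: "IP_tilde h y Q = density \<nu> G"
    unfolding IP_tilde_def G_def by (subst Qd) (simp add: density_density_eq)
  have ZP: "(\<integral>\<^sup>+x. F x \<partial>\<nu>) = (\<integral>\<^sup>+x. IP_g h y x \<partial>P)"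
    unfolding F_def IP_g_def by (subst Pd) (simp add: nn_integral_density)
  have ZQ: "(\<integral>\<^sup>+x. G x \<partial>\<nu>) = (\<integral>\<^sup>+x. IP_g h y x \<partial>Q)"
    unfolding G_def IP_g_def by (subst Qd) (simp add: nn_integral_density)
  have evP: "evidence (IP_tilde h y P) = (\<integral>\<^sup>+x. F x \<partial>\<nu>)"
    unfolding tP evidence_def by (simp add: emeasure_density)
  have evQ: "evidence (IP_tilde h y Q) = (\<integral>\<^sup>+x. G x \<partial>\<nu>)"
    unfolding tQ evidence_def by (simp add: emeasure_density)
  have hnn: "0 \<le> h y x" for x using model by (simp add: IP_model_def)
  have CS: "(\<integral>\<^sup>+x. IP_g h y x * esq (RN_deriv \<nu> P x * RN_deriv \<nu> Q x) \<partial>\<nu>) \<le> (\<integral>\<^sup>+x. esq (F x * G x) \<partial>\<nu>)"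
  proof (rule nn_integral_mono)
    fix x
    have "F x * G x = (p x * q x) * (ennreal (h y x) * ennreal (h y x))"
      unfolding F_def G_def by (simp add: ac_simps)
    then have "esq (F x * G x) = esq (p x * q x) * ennreal (h y x)"
      by (simp add: esq_mult esq_sq)
    then show "IP_g h y x * esq (RN_deriv \<nu> P x * RN_deriv \<nu> Q x) \<le> esq (F x * G x)"
      by (simp add: IP_g_def p_def q_def ac_simps)
  qed
  have "hellinger (normalize (density \<nu> F)) (normalize (density \<nu> G)) \<le> hellinger P Q"
  proof (rule post_bound[OF nu hyp_ac(1)[OF H] sP _ hyp_ac(2)[OF H] sQ _ gm H nu _ _ ZP ZQ _ _ _ _ CS])
    show "prob_space P" "prob_space Q" using aP aQ by (simp_all add: IP_adm_def)
    show "0 < (\<integral>\<^sup>+x. IP_g h y x \<partial>P)" "(\<integral>\<^sup>+x. IP_g h y x \<partial>P) < top"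
      using aP evP ZP by (simp_all add: IP_adm_def)
    show "0 < (\<integral>\<^sup>+x. IP_g h y x \<partial>Q)" "(\<integral>\<^sup>+x. IP_g h y x \<partial>Q) < top"
      using aQ evQ ZQ by (simp_all add: IP_adm_def)
  qed simp_all
  then show ?thesis unfolding IP_post_def tP tQ .
qed



lemma meas_pair_borel:
  fixes \<phi> :: "'a::second_countable_topology \<Rightarrow> 'b::second_countable_topology \<Rightarrow> real"
  assumes m: "(\<lambda>(x, x'). \<phi> x x') \<in> borel_measurable borel"
    and s1: "sets M1 = sets (borel :: 'a measure)" and s2: "sets M2 = sets (borel :: 'b measure)"
  shows "(\<lambda>z. \<phi> (fst z) (snd z)) \<in> borel_measurable (M1 \<Otimes>\<^sub>M M2)"
proof -
  have "sets (M1 \<Otimes>\<^sub>M M2) = sets (borel \<Otimes>\<^sub>M borel :: ('a \<times> 'b) measure)"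
    by (rule sets_pair_measure_cong[OF s1 s2])
  also have "\<dots> = sets (borel :: ('a \<times> 'b) measure)" unfolding borel_prod ..
  finally have "measurable (M1 \<Otimes>\<^sub>M M2) (borel :: real measure) = measurable borel borel"
    by (rule measurable_cong_sets) simp
  then show ?thesis using m by (simp add: case_prod_beta')
qed

lemma meas_pair_borel_swap:
  fixes \<phi> :: "'a::second_countable_topology \<Rightarrow> 'b::second_countable_topology \<Rightarrow> real"
  assumes m: "(\<lambda>(x, x'). \<phi> x x') \<in> borel_measurable borel"
    and s1: "sets M1 = sets (borel :: 'b measure)" and s2: "sets M2 = sets (borel :: 'a measure)"
  shows "(\<lambda>z. \<phi> (snd z) (fst z)) \<in> borel_measurable (M1 \<Otimes>\<^sub>M M2)"
proof -
  have "(\<lambda>z. \<phi> (fst z) (snd z)) \<in> borel_measurable (M2 \<Otimes>\<^sub>M M1)"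
    by (rule meas_pair_borel[OF m s2 s1])
  then have "(\<lambda>z. \<phi> (fst z) (snd z)) \<circ> (\<lambda>z. (snd z, fst z)) \<in> borel_measurable (M1 \<Otimes>\<^sub>M M2)"
    by (intro measurable_comp[where N="M2 \<Otimes>\<^sub>M M1"]) (auto intro: measurable_Pair)
  then show ?thesis by (simp add: comp_def)
qed

lemma SE_fubini:
  fixes T :: "'a::euclidean_space \<Rightarrow> 'a \<Rightarrow> real"
  assumes model: "SE_model T h y" and sf: "sigma_finite_measure M" and sM: "sets M = sets borel"
    and sm[measurable]: "s \<in> borel_measurable M"
  shows "(\<integral>\<^sup>+x. ennreal (h y x) * (\<integral>\<^sup>+x'. ennreal (T x x') * s x' \<partial>M) \<partial>lborel)
       = (\<integral>\<^sup>+x'. SE_g T h y x' * s x' \<partial>M)"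
proof -
  have Tm: "(\<lambda>(x, x'). T x x') \<in> borel_measurable borel" and hnn: "\<And>x. 0 \<le> h y x"
    and Tnn: "\<And>x x'. 0 \<le> T x x'" and hb: "h y \<in> borel_measurable borel"
    using model by (simp_all add: SE_model_def)
  have [measurable]: "(\<lambda>z. T (fst z) (snd z)) \<in> borel_measurable (lborel \<Otimes>\<^sub>M M)"
    by (rule meas_pair_borel[OF Tm _ sM]) simp
  have [measurable]: "h y \<in> borel_measurable lborel" using hb by simp
  have [measurable]: "s \<in> borel_measurable M" by simp
  have Tx[measurable]: "(\<lambda>x'. T x x') \<in> borel_measurable M" for x
    using measurable_Pair2[OF meas_pair_borel[OF Tm _ sM, of lborel], of x] by simp
  have spM: "space M = UNIV" using sets_eq_imp_space_eq[OF sM] by simp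
  have Tx2[measurable]: "(\<lambda>x. T x x') \<in> borel_measurable borel" for x'
    using measurable_Pair1[OF meas_pair_borel[OF Tm _ sM, of lborel], of x'] spM by simp
  interpret M: sigma_finite_measure M by (rule sf)
  interpret pair_sigma_finite lborel M by unfold_locales
  have "(\<integral>\<^sup>+x. ennreal (h y x) * (\<integral>\<^sup>+x'. ennreal (T x x') * s x' \<partial>M) \<partial>lborel)
      = (\<integral>\<^sup>+x. (\<integral>\<^sup>+x'. ennreal (h y x) * (ennreal (T x x') * s x') \<partial>M) \<partial>lborel)"
    by (rule nn_integral_cong) (simp add: nn_integral_cmult)
  also have "\<dots> = (\<integral>\<^sup>+x'. (\<integral>\<^sup>+x. ennreal (h y x) * (ennreal (T x x') * s x') \<partial>lborel) \<partial>M)"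
  proof (rule Fubini'[symmetric])
    show "(\<lambda>(x, x'). ennreal (h y x) * (ennreal (T x x') * s x')) \<in> borel_measurable (lborel \<Otimes>\<^sub>M M)"
      unfolding case_prod_beta' by measurable
  qed
  also have "\<dots> = (\<integral>\<^sup>+x'. SE_g T h y x' * s x' \<partial>M)"
  proof (rule nn_integral_cong)
    fix x'
    have "(\<integral>\<^sup>+x. ennreal (h y x) * (ennreal (T x x') * s x') \<partial>lborel)
        = (\<integral>\<^sup>+x. ennreal (h y x * T x x') * s x' \<partial>lborel)"
      by (rule nn_integral_cong) (simp only: ennreal_mult[OF hnn Tnn] mult.assoc)
    also have "\<dots> = SE_g T h y x' * s x'"
      unfolding SE_g_def by (rule nn_integral_multc) simp
    finally show "(\<integral>\<^sup>+x. ennreal (h y x) * (ennreal (T x x') * s x') \<partial>lborel) = SE_g T h y x' * s x'" .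
  qed
  finally show ?thesis .
qed


lemma prob_sf: "prob_space P \<Longrightarrow> sigma_finite_measure P"
  using prob_space.finite_measure finite_measure.axioms(1) by blast

lemma SE_case:
  fixes T :: "'a::euclidean_space \<Rightarrow> 'a \<Rightarrow> real" and h :: "'y \<Rightarrow> 'a \<Rightarrow> real"
  assumes model: "SE_model T h y" and aP: "SE_adm T h y P" and aQ: "SE_adm T h y Q"
    and nuM: "\<nu> \<in> Mbar_borel" and H: "hypH1 (SE_g T h y) \<nu> P Q \<or> hypH2 (SE_g T h y) \<nu> P Q"
  shows "hellinger (SE_post T h y P) (SE_post T h y Q) \<le> hellinger P Q"
proof -
  have nu: "sigma_finite_measure \<nu>" by (rule Mbar_sf[OF nuM])
  have snu: "sets \<nu> = sets borel" by (rule Mbar_sets[OF nuM])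
  have sP: "sets P = sets \<nu>" using aP snu by (simp add: SE_adm_def)
  have sQ: "sets Q = sets \<nu>" using aQ snu by (simp add: SE_adm_def)
  have pP: "prob_space P" "prob_space Q" using aP aQ by (simp_all add: SE_adm_def)
  have Tm: "(\<lambda>(x, x'). T x x') \<in> borel_measurable borel" and hnn: "\<And>x. 0 \<le> h y x"
    and Tnn: "\<And>x x'. 0 \<le> T x x'" and hb: "h y \<in> borel_measurable borel"
    using model by (simp_all add: SE_model_def)
  have gm[measurable]: "SE_g T h y \<in> borel_measurable \<nu>"
  proof -
    have [measurable]: "(\<lambda>z. T (snd z) (fst z)) \<in> borel_measurable (\<nu> \<Otimes>\<^sub>M lborel)"
      by (rule meas_pair_borel_swap[OF Tm snu]) simp
    have [measurable]: "h y \<in> borel_measurable lborel" using hb by simp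
    have "(\<lambda>z. ennreal (h y (snd z) * T (snd z) (fst z))) \<in> borel_measurable (\<nu> \<Otimes>\<^sub>M lborel)"
      by measurable
    from lborel.borel_measurable_nn_integral_fst[OF this] show ?thesis
      unfolding SE_g_def[abs_def] by simp
  qed
  define p where "p = RN_deriv \<nu> P"
  define q where "q = RN_deriv \<nu> Q"
  have pm[measurable]: "p \<in> borel_measurable \<nu>" "q \<in> borel_measurable \<nu>"
    unfolding p_def q_def by simp_all
  have Pd: "P = density \<nu> p"
    unfolding p_def using sigma_finite_measure.density_RN_deriv[OF nu hyp_ac(1)[OF H] sP] by simp
  have Qd: "Q = density \<nu> q"
    unfolding q_def using sigma_finite_measure.density_RN_deriv[OF nu hyp_ac(2)[OF H] sQ] by simp
  define AP where "AP x = (\<integral>\<^sup>+x'. ennreal (T x x') \<partial>P)" for x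
  define AQ where "AQ x = (\<integral>\<^sup>+x'. ennreal (T x x') \<partial>Q)" for x
  have APm[measurable]: "AP \<in> borel_measurable lborel" "AQ \<in> borel_measurable lborel"
  proof -
    have sP': "sets P = sets borel" "sets Q = sets borel" using sP sQ snu by simp_all
    have "(\<lambda>z. ennreal (T (fst z) (snd z))) \<in> borel_measurable (lborel \<Otimes>\<^sub>M P)"
      using meas_pair_borel[OF Tm _ sP'(1), of lborel] by simp
    from sigma_finite_measure.borel_measurable_nn_integral_fst[OF prob_sf[OF pP(1)] this]
    show "AP \<in> borel_measurable lborel" unfolding AP_def[abs_def] by simp
    have "(\<lambda>z. ennreal (T (fst z) (snd z))) \<in> borel_measurable (lborel \<Otimes>\<^sub>M Q)"
      using meas_pair_borel[OF Tm _ sP'(2), of lborel] by simp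
    from sigma_finite_measure.borel_measurable_nn_integral_fst[OF prob_sf[OF pP(2)] this]
    show "AQ \<in> borel_measurable lborel" unfolding AQ_def[abs_def] by simp
  qed
  have [measurable]: "h y \<in> borel_measurable lborel" using hb by simp
  define F where "F x = ennreal (h y x) * AP x" for x
  define G where "G x = ennreal (h y x) * AQ x" for x
  have [measurable]: "F \<in> borel_measurable lborel" "G \<in> borel_measurable lborel"
    unfolding F_def G_def by simp_all
  have tP: "SE_tilde T h y P = density lborel F"
    unfolding SE_tilde_def F_def AP_def ..
  have tQ: "SE_tilde T h y Q = density lborel G"
    unfolding SE_tilde_def G_def AQ_def ..
  have ZP: "(\<integral>\<^sup>+x. F x \<partial>lborel) = (\<integral>\<^sup>+x. SE_g T h y x \<partial>P)"
    using SE_fubini[OF model prob_sf[OF pP(1)], of "\<lambda>_. 1"] sP snu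
    by (simp add: F_def AP_def)
  have ZQ: "(\<integral>\<^sup>+x. G x \<partial>lborel) = (\<integral>\<^sup>+x. SE_g T h y x \<partial>Q)"
    using SE_fubini[OF model prob_sf[OF pP(2)], of "\<lambda>_. 1"] sQ snu
    by (simp add: G_def AQ_def)
  have evP: "evidence (SE_tilde T h y P) = (\<integral>\<^sup>+x. F x \<partial>lborel)"
    unfolding tP evidence_def by (simp add: emeasure_density)
  have evQ: "evidence (SE_tilde T h y Q) = (\<integral>\<^sup>+x. G x \<partial>lborel)"
    unfolding tQ evidence_def by (simp add: emeasure_density)
  have Tx[measurable]: "(\<lambda>x'. T x x') \<in> borel_measurable \<nu>" for x
    using measurable_Pair2[OF meas_pair_borel[OF Tm _ snu, of lborel], of x] by simp
  have APd: "AP x = (\<integral>\<^sup>+x'. ennreal (T x x') * p x' \<partial>\<nu>)" for x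
    unfolding AP_def by (subst Pd) (simp add: nn_integral_density mult.commute)
  have AQd: "AQ x = (\<integral>\<^sup>+x'. ennreal (T x x') * q x' \<partial>\<nu>)" for x
    unfolding AQ_def by (subst Qd) (simp add: nn_integral_density mult.commute)
  have CS: "(\<integral>\<^sup>+x. SE_g T h y x * esq (RN_deriv \<nu> P x * RN_deriv \<nu> Q x) \<partial>\<nu>) \<le> (\<integral>\<^sup>+x. esq (F x * G x) \<partial>lborel)"
  proof -
    have "(\<integral>\<^sup>+x. SE_g T h y x * esq (RN_deriv \<nu> P x * RN_deriv \<nu> Q x) \<partial>\<nu>)
        = (\<integral>\<^sup>+x. ennreal (h y x) * (\<integral>\<^sup>+x'. ennreal (T x x') * esq (p x' * q x') \<partial>\<nu>) \<partial>lborel)"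
      unfolding p_def q_def by (rule SE_fubini[OF model nu snu, symmetric]) simp
    also have "\<dots> \<le> (\<integral>\<^sup>+x. esq (F x * G x) \<partial>lborel)"
    proof (rule nn_integral_mono)
      fix x
      have "F x * G x = (ennreal (h y x) * ennreal (h y x)) * (AP x * AQ x)"
        unfolding F_def G_def by (simp add: ac_simps)
      then have e: "esq (F x * G x) = ennreal (h y x) * esq (AP x * AQ x)"
        by (simp add: esq_mult esq_sq)
      have "(\<integral>\<^sup>+x'. ennreal (T x x') * esq (p x' * q x') \<partial>\<nu>) \<le> esq (AP x * AQ x)"
        unfolding APd AQd by (rule CS_kernel) simp_all
      then show "ennreal (h y x) * (\<integral>\<^sup>+x'. ennreal (T x x') * esq (p x' * q x') \<partial>\<nu>) \<le> esq (F x * G x)"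
        unfolding e by (rule mult_left_mono) simp
    qed
    finally show ?thesis .
  qed
  have "hellinger (normalize (density lborel F)) (normalize (density lborel G)) \<le> hellinger P Q"
  proof (rule post_bound[OF nu hyp_ac(1)[OF H] sP pP(1) hyp_ac(2)[OF H] sQ pP(2) gm H
        lborel.sigma_finite_measure_axioms _ _ ZP ZQ _ _ _ _ CS])
    show "0 < (\<integral>\<^sup>+x. SE_g T h y x \<partial>P)" "(\<integral>\<^sup>+x. SE_g T h y x \<partial>P) < top"
      using aP evP ZP by (simp_all add: SE_adm_def)
    show "0 < (\<integral>\<^sup>+x. SE_g T h y x \<partial>Q)" "(\<integral>\<^sup>+x. SE_g T h y x \<partial>Q) < top"
      using aQ evQ ZQ by (simp_all add: SE_adm_def)
  qed simp_all
  then show ?thesis unfolding SE_post_def tP tQ .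
qed


lemma mpair:
  fixes f :: "'m \<Rightarrow> 'a::second_countable_topology" and g :: "'m \<Rightarrow> 'b::second_countable_topology"
  assumes "f \<in> borel_measurable M" "g \<in> borel_measurable M"
  shows "(\<lambda>u. (f u, g u)) \<in> borel_measurable M"
  using measurable_Pair[OF assms] by (simp add: borel_prod)

lemma m3:
  fixes T :: "'a::second_countable_topology \<Rightarrow> 'b::second_countable_topology \<Rightarrow> 'c::second_countable_topology \<Rightarrow> real"
  assumes Tm: "(\<lambda>(a, b, c). T a b c) \<in> borel_measurable borel"
    and "f1 \<in> borel_measurable M" "f2 \<in> borel_measurable M" "f3 \<in> borel_measurable M"
  shows "(\<lambda>u. T (f1 u) (f2 u) (f3 u)) \<in> borel_measurable M"
  using measurable_compose[OF mpair[OF assms(2) mpair[OF assms(3,4)]] Tm] by simp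

lemma m2:
  fixes S :: "'a::second_countable_topology \<times> 'b::second_countable_topology \<Rightarrow> 'c::topological_space"
  assumes Sm: "S \<in> borel_measurable borel"
    and "f1 \<in> borel_measurable M" "f2 \<in> borel_measurable M"
  shows "(\<lambda>u. S (f1 u, f2 u)) \<in> borel_measurable M"
  using measurable_compose[OF mpair[OF assms(2,3)] Sm] by simp

lemma fst_lb: "fst \<in> borel_measurable (lborel \<Otimes>\<^sub>M (M::'b measure))"
  using measurable_fst[of lborel M] by (simp add: measurable_lborel1)

lemma snd_lb: "snd \<in> borel_measurable ((M::'b measure) \<Otimes>\<^sub>M lborel)"
  using measurable_snd[of M lborel] by (simp add: measurable_lborel1)

lemma fubini_gen:
  fixes K :: "'a::euclidean_space \<Rightarrow> 'a \<Rightarrow> real" and H :: "'a \<Rightarrow> real"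
  assumes Tm: "(\<lambda>(x, x'). K x x') \<in> borel_measurable borel" and hnn: "\<And>x. 0 \<le> H x"
    and Tnn: "\<And>x x'. 0 \<le> K x x'" and hb: "H \<in> borel_measurable borel"
    and sf: "sigma_finite_measure M" and sM: "sets M = sets borel"
    and sm[measurable]: "s \<in> borel_measurable M"
  shows "(\<integral>\<^sup>+x. ennreal (H x) * (\<integral>\<^sup>+x'. ennreal (K x x') * s x' \<partial>M) \<partial>lborel)
       = (\<integral>\<^sup>+x'. (\<integral>\<^sup>+xk. ennreal (H xk * K xk x') \<partial>lborel) * s x' \<partial>M)"
proof -
  have [measurable]: "(\<lambda>z. K (fst z) (snd z)) \<in> borel_measurable (lborel \<Otimes>\<^sub>M M)"
    by (rule meas_pair_borel[OF Tm _ sM]) simp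
  have [measurable]: "H \<in> borel_measurable lborel" using hb by simp
  have Tx[measurable]: "(\<lambda>x'. K x x') \<in> borel_measurable M" for x
    using measurable_Pair2[OF meas_pair_borel[OF Tm _ sM, of lborel], of x] by simp
  have spM: "space M = UNIV" using sets_eq_imp_space_eq[OF sM] by simp
  have Tx2[measurable]: "(\<lambda>x. K x x') \<in> borel_measurable borel" for x'
    using measurable_Pair1[OF meas_pair_borel[OF Tm _ sM, of lborel], of x'] spM by simp
  interpret M: sigma_finite_measure M by (rule sf)
  interpret pair_sigma_finite lborel M by unfold_locales
  have "(\<integral>\<^sup>+x. ennreal (H x) * (\<integral>\<^sup>+x'. ennreal (K x x') * s x' \<partial>M) \<partial>lborel)
      = (\<integral>\<^sup>+x. (\<integral>\<^sup>+x'. ennreal (H x) * (ennreal (K x x') * s x') \<partial>M) \<partial>lborel)"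
    by (rule nn_integral_cong) (simp add: nn_integral_cmult)
  also have "\<dots> = (\<integral>\<^sup>+x'. (\<integral>\<^sup>+x. ennreal (H x) * (ennreal (K x x') * s x') \<partial>lborel) \<partial>M)"
  proof (rule Fubini'[symmetric])
    show "(\<lambda>(x, x'). ennreal (H x) * (ennreal (K x x') * s x')) \<in> borel_measurable (lborel \<Otimes>\<^sub>M M)"
      unfolding case_prod_beta' by measurable
  qed
  also have "\<dots> = (\<integral>\<^sup>+x'. (\<integral>\<^sup>+xk. ennreal (H xk * K xk x') \<partial>lborel) * s x' \<partial>M)"
  proof (rule nn_integral_cong)
    fix x'
    have "(\<integral>\<^sup>+x. ennreal (H x) * (ennreal (K x x') * s x') \<partial>lborel)
        = (\<integral>\<^sup>+x. ennreal (H x * K x x') * s x' \<partial>lborel)"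
      by (rule nn_integral_cong) (simp only: ennreal_mult[OF hnn Tnn] mult.assoc)
    also have "\<dots> = (\<integral>\<^sup>+xk. ennreal (H xk * K xk x') \<partial>lborel) * s x'"
      by (rule nn_integral_multc) simp
    finally show "(\<integral>\<^sup>+x. ennreal (H x) * (ennreal (K x x') * s x') \<partial>lborel) = (\<integral>\<^sup>+xk. ennreal (H xk * K xk x') \<partial>lborel) * s x'" .
  qed
  finally show ?thesis .
qed

lemma PS_fubini:
  fixes T :: "'b::euclidean_space \<Rightarrow> 'b \<Rightarrow> 'w::euclidean_space \<Rightarrow> real"
  assumes model: "PS_model T h y" and sm[measurable]: "s \<in> borel_measurable (lborel :: ('b \<times> 'w) measure)"
  shows "(\<integral>\<^sup>+z. ennreal (h y (fst z) (snd z)) * (\<integral>\<^sup>+x'. ennreal (T (fst z) x' (snd z)) * s (x', snd z) \<partial>lborel) \<partial>lborel)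
       = (\<integral>\<^sup>+z. PS_g T h y z * s z \<partial>lborel)"
proof -
  have Tm: "(\<lambda>(x, x', w). T x x' w) \<in> borel_measurable borel" and hnn: "\<And>x w. 0 \<le> h y x w"
    and Tnn: "\<And>x x' w. 0 \<le> T x x' w" and hb: "(\<lambda>(x, w). h y x w) \<in> borel_measurable borel"
    using model by (simp_all add: PS_model_def)
  have sb: "s \<in> borel_measurable borel" using sm by simp
  define \<phi> where "\<phi> z = ennreal (h y (fst z) (snd z)) * (\<integral>\<^sup>+x'. ennreal (T (fst z) x' (snd z)) * s (x', snd z) \<partial>lborel)"
    for z :: "'b \<times> 'w"
  have fb: "fst \<in> borel_measurable (lborel \<Otimes>\<^sub>M (lborel::'w measure))" by (rule fst_lb)
  have sb2: "snd \<in> borel_measurable ((lborel::'b measure) \<Otimes>\<^sub>M (lborel::'w measure))" by (rule snd_lb)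
  have phim: "\<phi> \<in> borel_measurable ((lborel::'b measure) \<Otimes>\<^sub>M (lborel::'w measure))"
  proof -
    let ?M = "((lborel::'b measure) \<Otimes>\<^sub>M (lborel::'w measure)) \<Otimes>\<^sub>M (lborel::'b measure)"
    have f1: "(\<lambda>u. fst (fst u)) \<in> borel_measurable ?M"
      by (rule measurable_compose[OF measurable_fst fb])
    have f3: "(\<lambda>u. snd (fst u)) \<in> borel_measurable ?M"
      by (rule measurable_compose[OF measurable_fst sb2])
    have f2: "snd \<in> borel_measurable ?M" by (rule snd_lb)
    have "(\<lambda>u. T (fst (fst u)) (snd u) (snd (fst u))) \<in> borel_measurable ?M"
      by (rule m3[OF Tm f1 f2 f3])
    moreover have "(\<lambda>u. s (snd u, snd (fst u))) \<in> borel_measurable ?M"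
      by (rule m2[OF sb f2 f3])
    ultimately have "(\<lambda>u. ennreal (T (fst (fst u)) (snd u) (snd (fst u))) * s (snd u, snd (fst u))) \<in> borel_measurable ?M"
      by measurable
    from lborel.borel_measurable_nn_integral_fst[OF this]
    have [measurable]: "(\<lambda>z. \<integral>\<^sup>+x'. ennreal (T (fst z) x' (snd z)) * s (x', snd z) \<partial>lborel) \<in> borel_measurable ((lborel::'b measure) \<Otimes>\<^sub>M (lborel::'w measure))"
      by simp
    have [measurable]: "(\<lambda>z. h y (fst z) (snd z)) \<in> borel_measurable ((lborel::'b measure) \<Otimes>\<^sub>M (lborel::'w measure))"
      using m2[OF hb fb sb2] by simp
    show ?thesis unfolding \<phi>_def by measurable
  qed
  have gsm: "(\<lambda>z. PS_g T h y z * s z) \<in> borel_measurable ((lborel::'b measure) \<Otimes>\<^sub>M (lborel::'w measure))"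
  proof -
    let ?M = "((lborel::'b measure) \<Otimes>\<^sub>M (lborel::'w measure)) \<Otimes>\<^sub>M (lborel::'b measure)"
    have f1: "(\<lambda>u. fst (fst u)) \<in> borel_measurable ?M"
      by (rule measurable_compose[OF measurable_fst fb])
    have f3: "(\<lambda>u. snd (fst u)) \<in> borel_measurable ?M"
      by (rule measurable_compose[OF measurable_fst sb2])
    have f2: "snd \<in> borel_measurable ?M" by (rule snd_lb)
    have "(\<lambda>u. T (snd u) (fst (fst u)) (snd (fst u))) \<in> borel_measurable ?M"
      by (rule m3[OF Tm f2 f1 f3])
    moreover have "(\<lambda>u. h y (snd u) (snd (fst u))) \<in> borel_measurable ?M"
      using m2[OF hb f2 f3] by simp
    ultimately have "(\<lambda>u. ennreal (h y (snd u) (snd (fst u)) * T (snd u) (fst (fst u)) (snd (fst u)))) \<in> borel_measurable ?M"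
      by measurable
    from lborel.borel_measurable_nn_integral_fst[OF this]
    have [measurable]: "PS_g T h y \<in> borel_measurable ((lborel::'b measure) \<Otimes>\<^sub>M (lborel::'w measure))"
      unfolding PS_g_def by (simp add: case_prod_beta')
    have [measurable]: "s \<in> borel_measurable ((lborel::'b measure) \<Otimes>\<^sub>M (lborel::'w measure))"
      using sm by (simp add: lborel_prod)
    show ?thesis by measurable
  qed
  have "(\<integral>\<^sup>+z. \<phi> z \<partial>lborel) = (\<integral>\<^sup>+z. \<phi> z \<partial>((lborel::'b measure) \<Otimes>\<^sub>M (lborel::'w measure)))"
    by (simp only: lborel_prod)
  also have "\<dots> = (\<integral>\<^sup>+w. \<integral>\<^sup>+x. \<phi> (x, w) \<partial>lborel \<partial>lborel)"
    by (rule lborel_pair.nn_integral_snd[OF phim, symmetric])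
  also have "\<dots> = (\<integral>\<^sup>+w. \<integral>\<^sup>+x'. PS_g T h y (x', w) * s (x', w) \<partial>lborel \<partial>lborel)"
  proof (rule nn_integral_cong)
    fix w :: 'w
    have c2: "(\<lambda>_::'b \<times> 'b. w) \<in> borel_measurable (borel \<Otimes>\<^sub>M borel)" by simp
    have c1: "(\<lambda>_::'b. w) \<in> borel_measurable borel" by simp
    have Tw: "(\<lambda>(x, x'). T x x' w) \<in> borel_measurable borel"
      using m3[OF Tm measurable_fst measurable_snd c2]
      by (simp add: case_prod_beta' borel_prod)
    have hw: "(\<lambda>x. h y x w) \<in> borel_measurable borel"
      using m2[OF hb measurable_ident_sets[OF refl] c1] by simp
    have sw: "(\<lambda>x'. s (x', w)) \<in> borel_measurable lborel"
      using m2[OF sb measurable_ident_sets[OF refl] c1] by simp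
    have "(\<integral>\<^sup>+x. \<phi> (x, w) \<partial>lborel)
        = (\<integral>\<^sup>+x'. (\<integral>\<^sup>+xk. ennreal (h y xk w * T xk x' w) \<partial>lborel) * s (x', w) \<partial>lborel)"
      unfolding \<phi>_def fst_conv snd_conv
      by (rule fubini_gen[OF Tw hnn Tnn hw lborel.sigma_finite_measure_axioms _ sw]) simp
    then show "(\<integral>\<^sup>+x. \<phi> (x, w) \<partial>lborel) = (\<integral>\<^sup>+x'. PS_g T h y (x', w) * s (x', w) \<partial>lborel)"
      by (simp add: PS_g_def)
  qed
  also have "\<dots> = (\<integral>\<^sup>+z. PS_g T h y z * s z \<partial>((lborel::'b measure) \<Otimes>\<^sub>M (lborel::'w measure)))"
    using lborel_pair.nn_integral_snd[OF gsm] by simp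
  also have "\<dots> = (\<integral>\<^sup>+z. PS_g T h y z * s z \<partial>lborel)"
    by (simp only: lborel_prod)
  finally show ?thesis unfolding \<phi>_def .
qed


lemma PS_meas:
  fixes T :: "'b::euclidean_space \<Rightarrow> 'b \<Rightarrow> 'w::euclidean_space \<Rightarrow> real"
  assumes model: "PS_model T h y" and sm[measurable]: "s \<in> borel_measurable (lborel :: ('b \<times> 'w) measure)"
  shows "(\<lambda>z. ennreal (h y (fst z) (snd z)) * (\<integral>\<^sup>+x'. ennreal (T (fst z) x' (snd z)) * s (x', snd z) \<partial>lborel)) \<in> borel_measurable (lborel :: ('b \<times> 'w) measure)"
    and "(\<lambda>z. PS_g T h y z * s z) \<in> borel_measurable (lborel :: ('b \<times> 'w) measure)"
proof -
  have Tm: "(\<lambda>(x, x', w). T x x' w) \<in> borel_measurable borel" and hnn: "\<And>x w. 0 \<le> h y x w"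
    and Tnn: "\<And>x x' w. 0 \<le> T x x' w" and hb: "(\<lambda>(x, w). h y x w) \<in> borel_measurable borel"
    using model by (simp_all add: PS_model_def)
  have sb: "s \<in> borel_measurable borel" using sm by simp
  define \<phi> where "\<phi> z = ennreal (h y (fst z) (snd z)) * (\<integral>\<^sup>+x'. ennreal (T (fst z) x' (snd z)) * s (x', snd z) \<partial>lborel)"
    for z :: "'b \<times> 'w"
  have fb: "fst \<in> borel_measurable (lborel \<Otimes>\<^sub>M (lborel::'w measure))" by (rule fst_lb)
  have sb2: "snd \<in> borel_measurable ((lborel::'b measure) \<Otimes>\<^sub>M (lborel::'w measure))" by (rule snd_lb)
  have phim: "\<phi> \<in> borel_measurable ((lborel::'b measure) \<Otimes>\<^sub>M (lborel::'w measure))"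
  proof -
    let ?M = "((lborel::'b measure) \<Otimes>\<^sub>M (lborel::'w measure)) \<Otimes>\<^sub>M (lborel::'b measure)"
    have f1: "(\<lambda>u. fst (fst u)) \<in> borel_measurable ?M"
      by (rule measurable_compose[OF measurable_fst fb])
    have f3: "(\<lambda>u. snd (fst u)) \<in> borel_measurable ?M"
      by (rule measurable_compose[OF measurable_fst sb2])
    have f2: "snd \<in> borel_measurable ?M" by (rule snd_lb)
    have "(\<lambda>u. T (fst (fst u)) (snd u) (snd (fst u))) \<in> borel_measurable ?M"
      by (rule m3[OF Tm f1 f2 f3])
    moreover have "(\<lambda>u. s (snd u, snd (fst u))) \<in> borel_measurable ?M"
      by (rule m2[OF sb f2 f3])
    ultimately have "(\<lambda>u. ennreal (T (fst (fst u)) (snd u) (snd (fst u))) * s (snd u, snd (fst u))) \<in> borel_measurable ?M"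
      by measurable
    from lborel.borel_measurable_nn_integral_fst[OF this]
    have [measurable]: "(\<lambda>z. \<integral>\<^sup>+x'. ennreal (T (fst z) x' (snd z)) * s (x', snd z) \<partial>lborel) \<in> borel_measurable ((lborel::'b measure) \<Otimes>\<^sub>M (lborel::'w measure))"
      by simp
    have [measurable]: "(\<lambda>z. h y (fst z) (snd z)) \<in> borel_measurable ((lborel::'b measure) \<Otimes>\<^sub>M (lborel::'w measure))"
      using m2[OF hb fb sb2] by simp
    show ?thesis unfolding \<phi>_def by measurable
  qed
  have gsm: "(\<lambda>z. PS_g T h y z * s z) \<in> borel_measurable ((lborel::'b measure) \<Otimes>\<^sub>M (lborel::'w measure))"
  proof -
    let ?M = "((lborel::'b measure) \<Otimes>\<^sub>M (lborel::'w measure)) \<Otimes>\<^sub>M (lborel::'b measure)"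
    have f1: "(\<lambda>u. fst (fst u)) \<in> borel_measurable ?M"
      by (rule measurable_compose[OF measurable_fst fb])
    have f3: "(\<lambda>u. snd (fst u)) \<in> borel_measurable ?M"
      by (rule measurable_compose[OF measurable_fst sb2])
    have f2: "snd \<in> borel_measurable ?M" by (rule snd_lb)
    have "(\<lambda>u. T (snd u) (fst (fst u)) (snd (fst u))) \<in> borel_measurable ?M"
      by (rule m3[OF Tm f2 f1 f3])
    moreover have "(\<lambda>u. h y (snd u) (snd (fst u))) \<in> borel_measurable ?M"
      using m2[OF hb f2 f3] by simp
    ultimately have "(\<lambda>u. ennreal (h y (snd u) (snd (fst u)) * T (snd u) (fst (fst u)) (snd (fst u)))) \<in> borel_measurable ?M"
      by measurable
    from lborel.borel_measurable_nn_integral_fst[OF this]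
    have [measurable]: "PS_g T h y \<in> borel_measurable ((lborel::'b measure) \<Otimes>\<^sub>M (lborel::'w measure))"
      unfolding PS_g_def by (simp add: case_prod_beta')
    have [measurable]: "s \<in> borel_measurable ((lborel::'b measure) \<Otimes>\<^sub>M (lborel::'w measure))"
      using sm by (simp add: lborel_prod)
    show ?thesis by measurable
  qed
  show "(\<lambda>z. ennreal (h y (fst z) (snd z)) * (\<integral>\<^sup>+x'. ennreal (T (fst z) x' (snd z)) * s (x', snd z) \<partial>lborel)) \<in> borel_measurable (lborel :: ('b \<times> 'w) measure)"
    using phim unfolding \<phi>_def by (simp add: lborel_prod)
  show "(\<lambda>z. PS_g T h y z * s z) \<in> borel_measurable (lborel :: ('b \<times> 'w) measure)"
    using gsm by (simp add: lborel_prod)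
qed


lemma PS_case:
  fixes T :: "'b::euclidean_space \<Rightarrow> 'b \<Rightarrow> 'w::euclidean_space \<Rightarrow> real"
    and h :: "'y \<Rightarrow> 'b \<Rightarrow> 'w \<Rightarrow> real"
  assumes model: "PS_model T h y" and aP: "PS_adm T h y P" and aQ: "PS_adm T h y Q"
    and nuM: "\<nu> \<in> Mbar_PS" and H: "hypH1 (PS_g T h y) \<nu> P Q \<or> hypH2 (PS_g T h y) \<nu> P Q"
  shows "hellinger (PS_post T h y P) (PS_post T h y Q) \<le> hellinger P Q"
proof -
  have nul: "\<nu> = lborel" using nuM by (simp add: Mbar_PS_def)
  have nu: "sigma_finite_measure \<nu>" unfolding nul by (rule lborel.sigma_finite_measure_axioms)
  have sP: "sets P = sets \<nu>" using aP nul by (simp add: PS_adm_def)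
  have sQ: "sets Q = sets \<nu>" using aQ nul by (simp add: PS_adm_def)
  have pP: "prob_space P" "prob_space Q" using aP aQ by (simp_all add: PS_adm_def)
  have Tm: "(\<lambda>(x, x', w). T x x' w) \<in> borel_measurable borel"
    and hb: "(\<lambda>(x, w). h y x w) \<in> borel_measurable borel"
    using model by (simp_all add: PS_model_def)
  have gm[measurable]: "PS_g T h y \<in> borel_measurable \<nu>"
    using PS_meas(2)[OF model, of "\<lambda>_. 1"] nul by simp
  have gml: "PS_g T h y \<in> borel_measurable lborel" using gm nul by simp
  define p where "p = RN_deriv \<nu> P"
  define q where "q = RN_deriv \<nu> Q"
  have pm[measurable]: "p \<in> borel_measurable \<nu>" "q \<in> borel_measurable \<nu>"
    unfolding p_def q_def by simp_all
  have pml: "p \<in> borel_measurable lborel" "q \<in> borel_measurable lborel" using pm nul by simp_all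
  have Pd: "P = density \<nu> p"
    unfolding p_def using sigma_finite_measure.density_RN_deriv[OF nu hyp_ac(1)[OF H] sP] by simp
  have Qd: "Q = density \<nu> q"
    unfolding q_def using sigma_finite_measure.density_RN_deriv[OF nu hyp_ac(2)[OF H] sQ] by simp
  define AP where "AP z = (\<integral>\<^sup>+x'. ennreal (T (fst z) x' (snd z)) * p (x', snd z) \<partial>lborel)" for z :: "'b \<times> 'w"
  define AQ where "AQ z = (\<integral>\<^sup>+x'. ennreal (T (fst z) x' (snd z)) * q (x', snd z) \<partial>lborel)" for z :: "'b \<times> 'w"
  define F where "F z = ennreal (h y (fst z) (snd z)) * AP z" for z
  define G where "G z = ennreal (h y (fst z) (snd z)) * AQ z" for z
  have Fm[measurable]: "F \<in> borel_measurable lborel" "G \<in> borel_measurable lborel"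
    using PS_meas(1)[OF model pml(1)] PS_meas(1)[OF model pml(2)]
    unfolding F_def G_def AP_def AQ_def by simp_all
  have tP: "PS_tilde T h y P = density lborel F"
    unfolding PS_tilde_def F_def AP_def p_def nul by (simp add: case_prod_beta')
  have tQ: "PS_tilde T h y Q = density lborel G"
    unfolding PS_tilde_def G_def AQ_def q_def nul by (simp add: case_prod_beta')
  have ZP: "(\<integral>\<^sup>+x. F x \<partial>lborel) = (\<integral>\<^sup>+x. PS_g T h y x \<partial>P)"
  proof -
    have "(\<integral>\<^sup>+x. F x \<partial>lborel) = (\<integral>\<^sup>+z. PS_g T h y z * p z \<partial>lborel)"
      unfolding F_def AP_def by (rule PS_fubini[OF model pml(1)])
    also have "\<dots> = (\<integral>\<^sup>+x. PS_g T h y x \<partial>P)"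
      by (subst Pd, unfold nul) (simp add: nn_integral_density[OF pml(1) gml] mult.commute)
    finally show ?thesis .
  qed
  have ZQ: "(\<integral>\<^sup>+x. G x \<partial>lborel) = (\<integral>\<^sup>+x. PS_g T h y x \<partial>Q)"
  proof -
    have "(\<integral>\<^sup>+x. G x \<partial>lborel) = (\<integral>\<^sup>+z. PS_g T h y z * q z \<partial>lborel)"
      unfolding G_def AQ_def by (rule PS_fubini[OF model pml(2)])
    also have "\<dots> = (\<integral>\<^sup>+x. PS_g T h y x \<partial>Q)"
      by (subst Qd, unfold nul) (simp add: nn_integral_density[OF pml(2) gml] mult.commute)
    finally show ?thesis .
  qed
  have evP: "evidence (PS_tilde T h y P) = (\<integral>\<^sup>+x. F x \<partial>lborel)"
    unfolding tP evidence_def by (simp add: emeasure_density)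
  have evQ: "evidence (PS_tilde T h y Q) = (\<integral>\<^sup>+x. G x \<partial>lborel)"
    unfolding tQ evidence_def by (simp add: emeasure_density)
  have CS: "(\<integral>\<^sup>+x. PS_g T h y x * esq (RN_deriv \<nu> P x * RN_deriv \<nu> Q x) \<partial>\<nu>) \<le> (\<integral>\<^sup>+x. esq (F x * G x) \<partial>lborel)"
  proof -
    have em: "(\<lambda>z. esq (p z * q z)) \<in> borel_measurable lborel" using pml by measurable
    have "(\<integral>\<^sup>+x. PS_g T h y x * esq (RN_deriv \<nu> P x * RN_deriv \<nu> Q x) \<partial>\<nu>)
        = (\<integral>\<^sup>+z. ennreal (h y (fst z) (snd z)) * (\<integral>\<^sup>+x'. ennreal (T (fst z) x' (snd z)) * esq (p (x', snd z) * q (x', snd z)) \<partial>lborel) \<partial>lborel)"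
    proof -
      have "RN_deriv \<nu> P = p" "RN_deriv \<nu> Q = q" by (simp_all add: p_def q_def)
      then show ?thesis unfolding nul by (simp add: PS_fubini[OF model em])
    qed
    also have "\<dots> \<le> (\<integral>\<^sup>+x. esq (F x * G x) \<partial>lborel)"
    proof (rule nn_integral_mono)
      fix z :: "'b \<times> 'w"
      have c1: "(\<lambda>_::'b. fst z) \<in> borel_measurable borel" by simp
      have c2: "(\<lambda>_::'b. snd z) \<in> borel_measurable borel" by simp
      have id: "(\<lambda>x::'b. x) \<in> borel_measurable borel" by simp
      have Kz: "(\<lambda>x'. T (fst z) x' (snd z)) \<in> borel_measurable lborel"
        using m3[OF Tm c1 id c2] by simp
      have pz: "(\<lambda>x'. p (x', snd z)) \<in> borel_measurable lborel" "(\<lambda>x'. q (x', snd z)) \<in> borel_measurable lborel"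
        using m2[OF pml(1)[simplified] id c2] m2[OF pml(2)[simplified] id c2] by simp_all
      have "F z * G z = (ennreal (h y (fst z) (snd z)) * ennreal (h y (fst z) (snd z))) * (AP z * AQ z)"
        unfolding F_def G_def by (simp add: ac_simps)
      then have e: "esq (F z * G z) = ennreal (h y (fst z) (snd z)) * esq (AP z * AQ z)"
        by (simp add: esq_mult esq_sq)
      have "(\<integral>\<^sup>+x'. ennreal (T (fst z) x' (snd z)) * esq (p (x', snd z) * q (x', snd z)) \<partial>lborel) \<le> esq (AP z * AQ z)"
        unfolding AP_def AQ_def by (rule CS_kernel) (use Kz pz in simp_all)
      then show "ennreal (h y (fst z) (snd z)) * (\<integral>\<^sup>+x'. ennreal (T (fst z) x' (snd z)) * esq (p (x', snd z) * q (x', snd z)) \<partial>lborel) \<le> esq (F z * G z)"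
        unfolding e by (rule mult_left_mono) simp
    qed
    finally show ?thesis .
  qed
  have "hellinger (normalize (density lborel F)) (normalize (density lborel G)) \<le> hellinger P Q"
  proof (rule post_bound[OF nu hyp_ac(1)[OF H] sP pP(1) hyp_ac(2)[OF H] sQ pP(2) gm H
        lborel.sigma_finite_measure_axioms Fm ZP ZQ _ _ _ _ CS])
    show "0 < (\<integral>\<^sup>+x. PS_g T h y x \<partial>P)" "(\<integral>\<^sup>+x. PS_g T h y x \<partial>P) < top"
      using aP evP ZP by (simp_all add: PS_adm_def)
    show "0 < (\<integral>\<^sup>+x. PS_g T h y x \<partial>Q)" "(\<integral>\<^sup>+x. PS_g T h y x \<partial>Q) < top"
      using aQ evQ ZQ by (simp_all add: PS_adm_def)
  qed
  then show ?thesis unfolding PS_post_def tP tQ .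
qed


theorem theorem4:
  shows
  "(\<forall>(h :: 'y \<Rightarrow> 'x::polish_space \<Rightarrow> real) y P Q.
      IP_model h y \<and> IP_adm h y P \<and> IP_adm h y Q \<and>
      (\<exists>\<nu>\<in>Mbar_borel. hypH1 (IP_g h y) \<nu> P Q \<or> hypH2 (IP_g h y) \<nu> P Q)
      \<longrightarrow> hellinger (IP_post h y P) (IP_post h y Q) \<le> hellinger P Q)
   \<and>
   (\<forall>(T :: 'a::euclidean_space \<Rightarrow> 'a \<Rightarrow> real) (h :: 'y \<Rightarrow> 'a \<Rightarrow> real) y P Q.
      SE_model T h y \<and> SE_adm T h y P \<and> SE_adm T h y Q \<and>
      (\<exists>\<nu>\<in>Mbar_borel. hypH1 (SE_g T h y) \<nu> P Q \<or> hypH2 (SE_g T h y) \<nu> P Q)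
      \<longrightarrow> hellinger (SE_post T h y P) (SE_post T h y Q) \<le> hellinger P Q)
   \<and>
   (\<forall>(T :: 'b::euclidean_space \<Rightarrow> 'b \<Rightarrow> 'w::euclidean_space \<Rightarrow> real)
       (h :: 'y \<Rightarrow> 'b \<Rightarrow> 'w \<Rightarrow> real) y P Q.
      PS_model T h y \<and> PS_adm T h y P \<and> PS_adm T h y Q \<and>
      (\<exists>\<nu>\<in>Mbar_PS. hypH1 (PS_g T h y) \<nu> P Q \<or> hypH2 (PS_g T h y) \<nu> P Q)
      \<longrightarrow> hellinger (PS_post T h y P) (PS_post T h y Q) \<le> hellinger P Q)"
proof (intro conjI allI impI)
  fix h :: "'y \<Rightarrow> 'x::polish_space \<Rightarrow> real" and y P Q
  assume "IP_model h y \<and> IP_adm h y P \<and> IP_adm h y Q \<and>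
      (\<exists>\<nu>\<in>Mbar_borel. hypH1 (IP_g h y) \<nu> P Q \<or> hypH2 (IP_g h y) \<nu> P Q)"
  then show "hellinger (IP_post h y P) (IP_post h y Q) \<le> hellinger P Q"
    by (elim conjE bexE) (rule IP_case)
next
  fix T :: "'a::euclidean_space \<Rightarrow> 'a \<Rightarrow> real" and h :: "'y \<Rightarrow> 'a \<Rightarrow> real" and y P Q
  assume "SE_model T h y \<and> SE_adm T h y P \<and> SE_adm T h y Q \<and>
      (\<exists>\<nu>\<in>Mbar_borel. hypH1 (SE_g T h y) \<nu> P Q \<or> hypH2 (SE_g T h y) \<nu> P Q)"
  then show "hellinger (SE_post T h y P) (SE_post T h y Q) \<le> hellinger P Q"
    by (elim conjE bexE) (rule SE_case)
next
  fix T :: "'b::euclidean_space \<Rightarrow> 'b \<Rightarrow> 'w::euclidean_space \<Rightarrow> real"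
    and h :: "'y \<Rightarrow> 'b \<Rightarrow> 'w \<Rightarrow> real" and y P Q
  assume "PS_model T h y \<and> PS_adm T h y P \<and> PS_adm T h y Q \<and>
      (\<exists>\<nu>\<in>Mbar_PS. hypH1 (PS_g T h y) \<nu> P Q \<or> hypH2 (PS_g T h y) \<nu> P Q)"
  then show "hellinger (PS_post T h y P) (PS_post T h y Q) \<le> hellinger P Q"
    by (elim conjE bexE) (rule PS_case)
qed

end
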